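(* Let $\Lambda^*$ be a factorial language in $(\mathbb F_+^d)^N$ and let $\emptyset\ne F\subseteq[N]$. Then \[\bigcap_{i\in F}\ker\phi_{\mathbf i}=\{a\in A: a=aQ_F\}\quad\text{and}\quad\{a\in A:aQ_F=0\}\subseteq\mathcal I_F.\] Hence $Q_F\in A$ if and only if $\mathcal I_F=A(I-Q_F)$.
   Context: $\mathbb F_+^d$ is the free semigroup on letters $[d]$ with empty word $\emptyset$. In $(\mathbb F_+^d)^N$: $\underline\mu*\underline\nu=(\mu_1\nu_1,\dots,\mu_N\nu_N)$; $|\underline\mu|=(|\mu_1|,\dots,|\mu_N|)$; $\operatorname{supp}\underline\mu=\{i:\mu_i\ne\emptyset\}$; $\delta_i(k)$ has the letter $k$ in coordinate $i$ and $\emptyset$ elsewhere. A factorial language $\Lambda^*\subseteq(\mathbb F_+^d)^N$: for every $i\in[N]$ some $\delta_i(k)\in\Lambda^*$, and $\Lambda^*$ is closed under subwords ($\underline\nu$ with $\underline\mu=\underline w*\underline\nu*\underline q$). On $\ell^2(\Lambda^* )$ with basis $\{e_{\underline w}\}$, $T_{\underline\mu}e_{\underline w}=e_{\underline\mu*\underline w}$ if $\underline\mu*\underline w\in\Lambda^*$ and $0$ otherwise. $A=C^*(T_{\underline\mu}^*T_{\underline\mu}:\underline\mu\in\Lambda^* )$ (unital, the algebra of checkers). For $i\in[N]$, $P_{\mathbf i}=\sum_{k\in[d]}T_{\delta_i(k)}T_{\delta_i(k)}^*$ and $Q_F=\prod_{i\in F}(I-P_{\mathbf i})$. Product system $X(\Lambda^*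 )$ over $\mathbb Z_+^N$ with coefficients $A$: $X_{\underline n}(\Lambda^* )=\overline{\operatorname{span}}\{T_{\underline\mu}a:a\in A,\underline\mu\in\Lambda^*,|\underline\mu|=\underline n\}\subseteq B(\ell^2(\Lambda^* ))$, with $\langle\xi,\eta\rangle=\xi^*\eta$, $\phi_{\underline n}(a)\xi\cdot b=a\xi b$, and multiplication given by operator product; all left actions are by compact operators. $\ker\phi_{\mathbf i}=\{a\in A:a\xi=0\ \forall\xi\in X_{\mathbf i}(\Lambda^* )\}$. $\mathcal J_F=(\bigcap_{i\in F}\ker\phi_{\mathbf i})^\perp$ (annihilator in $A$) and $\mathcal I_F=\{a\in\mathcal J_F:\langle\xi,a\eta\rangle\in\mathcal J_F\ \forall\xi,\eta\in X_{\underline m}(\Lambda^* ),\ \underline m\in\mathbb Z_+^N \text{ with } \{i:m_i\neq0\}\cap F=\emptyset\}$. *)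

theory Defs
  imports "HOL-Analysis.Analysis" "HOL-Library.Function_Algebras"
begin

text \<open>Elements of (F_+^d)^N are functions nat => nat list, nonempty only on {1..N};
letters are 1..d.  Vectors of l2(Lambda*) are functions word => complex vanishing
off Lambda*.  Bounded operators are maps vec => vec that are linear and bounded on
l2(Lambda*), and send non-l2 inputs to 0 (a canonical normalisation).
The product of operators is composition, sums/differences are pointwise.\<close>

type_synonym word = "nat \<Rightarrow> nat list"
type_synonym vec = "word \<Rightarrow> complex"
type_synonym op = "vec \<Rightarrow> vec"

definition tcat :: "word \<Rightarrow> word \<Rightarrow> word" where
  "tcat \<mu> \<nu> = (\<lambda>i. \<mu> i @ \<nu> i)"

definition tlen :: "word \<Rightarrow> nat \<Rightarrow> nat" where
  "tlen \<mu> = (\<lambda>i. length (\<mu> i))"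

definition delta :: "nat \<Rightarrow> nat \<Rightarrow> word" where
  "delta i k = (\<lambda>j. if j = i then [k] else [])"

definition unitvec :: "nat \<Rightarrow> nat \<Rightarrow> nat" where
  "unitvec i = (\<lambda>j. if j = i then 1 else 0)"

definition words :: "nat \<Rightarrow> nat \<Rightarrow> word set" where
  "words d N = {w. (\<forall>i. i \<notin> {1..N} \<longrightarrow> w i = []) \<and> (\<forall>i. set (w i) \<subseteq> {1..d})}"

definition factorial_language :: "nat \<Rightarrow> nat \<Rightarrow> word set \<Rightarrow> bool" where
  "factorial_language d N L \<longleftrightarrow>
     L \<subseteq> words d N \<and>
     (\<forall>i\<in>{1..N}. \<exists>k\<in>{1..d}. delta i k \<in> L) \<and>
     (\<forall>\<mu>\<in>L. \<forall>w \<nu> q. \<mu> = tcat (tcat w \<nu>) q \<longrightarrow> \<nu> \<in> L)"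

definition ell2 :: "word set \<Rightarrow> vec set" where
  "ell2 L = {f. (\<forall>x. x \<notin> L \<longrightarrow> f x = 0) \<and> (\<lambda>x. (cmod (f x))^2) summable_on UNIV}"

definition l2norm :: "vec \<Rightarrow> real" where
  "l2norm f = sqrt (\<Sum>\<^sub>\<infinity>x. (cmod (f x))^2)"

definition l2inner :: "vec \<Rightarrow> vec \<Rightarrow> complex" where
  "l2inner f g = (\<Sum>\<^sub>\<infinity>x. cnj (f x) * g x)"

definition bounded_ops :: "word set \<Rightarrow> op set" where
  "bounded_ops L = {T.
     (\<forall>f\<in>ell2 L. T f \<in> ell2 L) \<and>
     (\<forall>f\<in>ell2 L. \<forall>g\<in>ell2 L. T (f + g) = T f + T g) \<and>
     (\<forall>c. \<forall>f\<in>ell2 L. T (\<lambda>x. c * f x) = (\<lambda>x. c * T f x)) \<and>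
     (\<exists>C. \<forall>f\<in>ell2 L. l2norm (T f) \<le> C * l2norm f) \<and>
     (\<forall>f. f \<notin> ell2 L \<longrightarrow> T f = 0)}"

definition idop :: "word set \<Rightarrow> op" where
  "idop L = (\<lambda>f. if f \<in> ell2 L then f else 0)"

definition opnorm :: "word set \<Rightarrow> op \<Rightarrow> real" where
  "opnorm L T = Sup {l2norm (T f) | f. f \<in> ell2 L \<and> l2norm f \<le> 1}"

definition adjoint :: "word set \<Rightarrow> op \<Rightarrow> op" where
  "adjoint L T = (THE S. S \<in> bounded_ops L \<and>
     (\<forall>f\<in>ell2 L. \<forall>g\<in>ell2 L. l2inner (S f) g = l2inner f (T g)))"

definition opscale :: "complex \<Rightarrow> op \<Rightarrow> op" where
  "opscale c T = (\<lambda>f x. c * T f x)"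

definition norm_closed :: "word set \<Rightarrow> op set \<Rightarrow> bool" where
  "norm_closed L S \<longleftrightarrow> (\<forall>s T. (\<forall>n. s n \<in> S) \<and> T \<in> bounded_ops L \<and>
       (\<lambda>n. opnorm L (s n - T)) \<longlonglongrightarrow> 0 \<longrightarrow> T \<in> S)"

definition unital_cstar_gen :: "word set \<Rightarrow> op set \<Rightarrow> op set" where
  "unital_cstar_gen L G = \<Inter>{S. S \<subseteq> bounded_ops L \<and> G \<subseteq> S \<and> idop L \<in> S \<and>
     (\<forall>a\<in>S. \<forall>b\<in>S. a + b \<in> S \<and> a \<circ> b \<in> S) \<and>
     (\<forall>c. \<forall>a\<in>S. opscale c a \<in> S) \<and> (\<forall>a\<in>S. adjoint L a \<in> S) \<and> norm_closed L S}"

definition closed_span :: "word set \<Rightarrow> op set \<Rightarrow> op set" where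
  "closed_span L G = \<Inter>{V. V \<subseteq> bounded_ops L \<and> G \<subseteq> V \<and> 0 \<in> V \<and>
     (\<forall>a\<in>V. \<forall>b\<in>V. a + b \<in> V) \<and> (\<forall>c. \<forall>a\<in>V. opscale c a \<in> V) \<and> norm_closed L V}"

text \<open>T_mu e_w = e_{mu*w} if mu*w in L, else 0.\<close>
definition shift :: "word set \<Rightarrow> word \<Rightarrow> op" where
  "shift L \<mu> = (\<lambda>f. if f \<in> ell2 L then
      (\<lambda>v. if v \<in> L \<and> (\<exists>w\<in>L. v = tcat \<mu> w) then f (THE w. v = tcat \<mu> w) else 0)
    else 0)"

definition checkers :: "word set \<Rightarrow> op set" where
  "checkers L = unital_cstar_gen L {adjoint L (shift L \<mu>) \<circ> shift L \<mu> | \<mu>. \<mu> \<in> L}"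

definition Xfib :: "word set \<Rightarrow> (nat \<Rightarrow> nat) \<Rightarrow> op set" where
  "Xfib L n = closed_span L {shift L \<mu> \<circ> a | \<mu> a. \<mu> \<in> L \<and> a \<in> checkers L \<and> tlen \<mu> = n}"

definition ker_phi :: "word set \<Rightarrow> nat \<Rightarrow> op set" where
  "ker_phi L i = {a \<in> checkers L. \<forall>\<xi>\<in>Xfib L (unitvec i). a \<circ> \<xi> = 0}"

definition annihilator :: "word set \<Rightarrow> op set \<Rightarrow> op set" where
  "annihilator L K = {a \<in> checkers L. \<forall>b\<in>K. a \<circ> b = 0}"

definition JF :: "word set \<Rightarrow> nat set \<Rightarrow> op set" where
  "JF L F = annihilator L (\<Inter>i\<in>F. ker_phi L i)"

definition IF :: "nat \<Rightarrow> word set \<Rightarrow> nat set \<Rightarrow> op set" where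
  "IF N L F = {a \<in> JF L F. \<forall>m. (\<forall>j. j \<notin> {1..N} \<longrightarrow> m j = 0) \<and> (\<forall>i\<in>F. m i = 0) \<longrightarrow>
      (\<forall>\<xi>\<in>Xfib L m. \<forall>\<eta>\<in>Xfib L m. adjoint L \<xi> \<circ> a \<circ> \<eta> \<in> JF L F)}"

definition Pproj :: "nat \<Rightarrow> word set \<Rightarrow> nat \<Rightarrow> op" where
  "Pproj d L i = (\<Sum>k\<in>{1..d}. shift L (delta i k) \<circ> adjoint L (shift L (delta i k)))"

definition QF :: "nat \<Rightarrow> word set \<Rightarrow> nat set \<Rightarrow> op" where
  "QF d L F = foldr (\<lambda>i acc. (idop L - Pproj d L i) \<circ> acc) (sorted_list_of_set F) (idop L)"

end

theory Submission
  imports Defs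
begin


definition ev :: "word \<Rightarrow> vec" where "ev x = (\<lambda>y. if y = x then 1 else 0)"

lemma ell2_vanish: "f \<in> ell2 L \<Longrightarrow> x \<notin> L \<Longrightarrow> f x = 0"
  by (simp add: ell2_def)

lemma ell2_summ: "f \<in> ell2 L \<Longrightarrow> (\<lambda>x. (cmod (f x))^2) summable_on UNIV"
  by (simp add: ell2_def)

lemma ell2_zero[simp]: "(0::vec) \<in> ell2 L"
  by (simp add: ell2_def)

lemma l2norm_nonneg: "l2norm f \<ge> 0"
  unfolding l2norm_def by (simp add: infsum_nonneg)

lemma ell2_dom:
  assumes f: "f \<in> ell2 L" and le: "\<And>x. cmod (g x) \<le> C * cmod (f x)"
    and van: "\<And>x. x \<notin> L \<Longrightarrow> g x = 0"
  shows "g \<in> ell2 L" "l2norm g \<le> \<bar>C\<bar> * l2norm f"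
proof -
  have sq: "(cmod (g x))^2 \<le> C^2 * (cmod (f x))^2" for x
  proof -
    have "0 \<le> cmod (g x)" by simp
    hence "(cmod (g x))^2 \<le> (C * cmod (f x))^2" by (rule power_mono[OF le[of x]])
    thus ?thesis by (simp add: power_mult_distrib)
  qed
  have s2: "(\<lambda>x. C^2 * (cmod (f x))^2) summable_on UNIV"
    using ell2_summ[OF f] by (rule summable_on_cmult_right)
  have sg: "(\<lambda>x. (cmod (g x))^2) summable_on UNIV"
    by (rule summable_on_comparison_test[OF s2]) (use sq in auto)
  thus "g \<in> ell2 L" using van by (simp add: ell2_def)
  have "(\<Sum>\<^sub>\<infinity>x. (cmod (g x))^2) \<le> (\<Sum>\<^sub>\<infinity>x. C^2 * (cmod (f x))^2)"
    by (rule infsum_mono[OF sg s2]) (use sq in auto)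
  also have "\<dots> = C^2 * (\<Sum>\<^sub>\<infinity>x. (cmod (f x))^2)"
    by (rule infsum_cmult_right) (use ell2_summ[OF f] in auto)
  finally have "sqrt (\<Sum>\<^sub>\<infinity>x. (cmod (g x))^2) \<le> sqrt (C^2 * (\<Sum>\<^sub>\<infinity>x. (cmod (f x))^2))"
    by (rule real_sqrt_le_mono)
  thus "l2norm g \<le> \<bar>C\<bar> * l2norm f"
    by (simp add: l2norm_def real_sqrt_mult)
qed

lemma ell2_scale:
  assumes f: "f \<in> ell2 L"
  shows "(\<lambda>x. c * f x) \<in> ell2 L" "l2norm (\<lambda>x. c * f x) = cmod c * l2norm f"
proof -
  show "(\<lambda>x. c * f x) \<in> ell2 L"
    by (rule ell2_dom(1)[OF f, of _ "cmod c"]) (auto simp: norm_mult ell2_vanish[OF f])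
  have "(\<Sum>\<^sub>\<infinity>x. (cmod (c * f x))^2) = (\<Sum>\<^sub>\<infinity>x. (cmod c)^2 * (cmod (f x))^2)"
    by (simp add: norm_mult power_mult_distrib)
  also have "\<dots> = (cmod c)^2 * (\<Sum>\<^sub>\<infinity>x. (cmod (f x))^2)"
    by (rule infsum_cmult_right) (use ell2_summ[OF f] in auto)
  finally show "l2norm (\<lambda>x. c * f x) = cmod c * l2norm f"
    by (simp add: l2norm_def real_sqrt_mult)
qed

lemma ell2_add:
  assumes f: "f \<in> ell2 L" and g: "g \<in> ell2 L"
  shows "f + g \<in> ell2 L" "l2norm (f + g) \<le> 2 * (l2norm f + l2norm g)"
proof -
  have sq: "(cmod ((f+g) x))^2 \<le> 2 * (cmod (f x))^2 + 2 * (cmod (g x))^2" for x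
  proof -
    have "cmod ((f+g) x) \<le> cmod (f x) + cmod (g x)" by (simp add: norm_triangle_ineq)
    hence "(cmod ((f+g) x))^2 \<le> (cmod (f x) + cmod (g x))^2" by (simp add: power_mono)
    also have "\<dots> \<le> 2 * (cmod (f x))^2 + 2 * (cmod (g x))^2"
    proof -
      have "0 \<le> (cmod (f x) - cmod (g x))^2" by simp
      thus ?thesis unfolding power2_sum power2_diff by linarith
    qed
    finally show ?thesis .
  qed
  have s2: "(\<lambda>x. 2 * (cmod (f x))^2 + 2 * (cmod (g x))^2) summable_on UNIV"
    by (intro summable_on_add summable_on_cmult_right ell2_summ[OF f] ell2_summ[OF g])
  have sg: "(\<lambda>x. (cmod ((f+g) x))^2) summable_on UNIV"
    by (rule summable_on_comparison_test[OF s2]) (use sq in auto)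
  thus "f + g \<in> ell2 L" using ell2_vanish[OF f] ell2_vanish[OF g] by (simp add: ell2_def)
  define A where "A = (\<Sum>\<^sub>\<infinity>x. (cmod (f x))^2)"
  define B where "B = (\<Sum>\<^sub>\<infinity>x. (cmod (g x))^2)"
  have A0: "A \<ge> 0" "B \<ge> 0" unfolding A_def B_def by (simp_all add: infsum_nonneg)
  have "(\<Sum>\<^sub>\<infinity>x. (cmod ((f+g) x))^2) \<le> (\<Sum>\<^sub>\<infinity>x. 2 * (cmod (f x))^2 + 2 * (cmod (g x))^2)"
    by (rule infsum_mono[OF sg s2]) (use sq in auto)
  also have "\<dots> = 2 * A + 2 * B"
    unfolding A_def B_def
    by (subst infsum_add) (auto intro!: summable_on_cmult_right ell2_summ f g simp: infsum_cmult_right ell2_summ[OF f] ell2_summ[OF g])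
  also have "\<dots> \<le> (2 * (sqrt A + sqrt B))^2"
  proof -
    have "0 \<le> sqrt A * sqrt B" using A0 by simp
    moreover have "(sqrt A)^2 = A" "(sqrt B)^2 = B" using A0 by simp_all
    ultimately show ?thesis unfolding power_mult_distrib power2_sum by simp
  qed
  finally have "sqrt (\<Sum>\<^sub>\<infinity>x. (cmod ((f+g) x))^2) \<le> sqrt ((2 * (sqrt A + sqrt B))^2)"
    by (rule real_sqrt_le_mono)
  thus "l2norm (f + g) \<le> 2 * (l2norm f + l2norm g)"
    using A0 by (simp add: l2norm_def A_def B_def)
qed

lemma point_le_l2norm:
  assumes f: "f \<in> ell2 L" shows "cmod (f x) \<le> l2norm f"
proof -
  have "sum (\<lambda>x. (cmod (f x))^2) {x} \<le> (\<Sum>\<^sub>\<infinity>x. (cmod (f x))^2)"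
    by (rule finite_sum_le_infsum[OF ell2_summ[OF f]]) auto
  thus ?thesis unfolding l2norm_def by (simp add: real_le_rsqrt)
qed

lemma l2norm_zero_imp:
  assumes f: "f \<in> ell2 L" "l2norm f = 0" shows "f = 0"
  using point_le_l2norm[OF f(1)] f(2) by (auto intro!: ext)

lemma ev_ell2: "x \<in> L \<Longrightarrow> ev x \<in> ell2 L"
proof -
  assume x: "x \<in> L"
  have "(\<lambda>y. (cmod (ev x y))^2) summable_on {x}" by simp
  moreover have "(\<lambda>y. (cmod (ev x y))^2) summable_on UNIV \<longleftrightarrow> (\<lambda>y. (cmod (ev x y))^2) summable_on {x}"
    by (rule summable_on_cong_neutral; auto simp: ev_def)
  ultimately have "(\<lambda>y. (cmod (ev x y))^2) summable_on UNIV" by simp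
  thus ?thesis using x unfolding ell2_def by (auto simp: ev_def)
qed

lemma l2norm_ev: "l2norm (ev x) = 1"
proof -
  have "(\<Sum>\<^sub>\<infinity>y. (cmod (ev x y))^2) = (\<Sum>\<^sub>\<infinity>y\<in>{x}. (cmod (ev x y))^2)"
    by (rule infsum_cong_neutral) (auto simp: ev_def)
  thus ?thesis by (simp add: l2norm_def ev_def)
qed

lemma l2inner_ev: "l2inner h (ev x) = cnj (h x)"
proof -
  have "(\<Sum>\<^sub>\<infinity>y. cnj (h y) * ev x y) = (\<Sum>\<^sub>\<infinity>y\<in>{x}. cnj (h y) * ev x y)"
    by (rule infsum_cong_neutral) (auto simp: ev_def)
  thus ?thesis by (simp add: l2inner_def ev_def)
qed

lemma l2inner_summ:
  assumes f: "f \<in> ell2 L" and g: "g \<in> ell2 L"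
  shows "(\<lambda>x. cnj (f x) * g x) summable_on UNIV"
proof -
  have s2: "(\<lambda>x. (cmod (f x))^2 + (cmod (g x))^2) summable_on UNIV"
    by (intro summable_on_add ell2_summ[OF f] ell2_summ[OF g])
  have "(\<lambda>x. norm (cnj (f x) * g x)) summable_on UNIV"
  proof (rule summable_on_comparison_test[OF s2])
    fix x
    show "norm (cnj (f x) * g x) \<le> (cmod (f x))^2 + (cmod (g x))^2"
    proof -
      have "0 \<le> (cmod (f x) - cmod (g x))^2" by simp
      moreover have "0 \<le> cmod (f x) * cmod (g x)" by simp
      ultimately show ?thesis unfolding power2_diff norm_mult by (simp, linarith)
    qed
  qed simp
  thus ?thesis by (simp add: summable_on_iff_abs_summable_on_complex)
qed

lemma l2inner_add_left:
  assumes "f \<in> ell2 L" "g \<in> ell2 L" "h \<in> ell2 L"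
  shows "l2inner (f + g) h = l2inner f h + l2inner g h"
  unfolding l2inner_def
  using infsum_add[OF l2inner_summ[OF assms(1,3)] l2inner_summ[OF assms(2,3)]]
  by (simp add: distrib_right)

lemma l2inner_add_right:
  assumes "f \<in> ell2 L" "g \<in> ell2 L" "h \<in> ell2 L"
  shows "l2inner f (g + h) = l2inner f g + l2inner f h"
  unfolding l2inner_def
  using infsum_add[OF l2inner_summ[OF assms(1,2)] l2inner_summ[OF assms(1,3)]]
  by (simp add: distrib_left)

lemma l2inner_scale_left:
  assumes "f \<in> ell2 L" "h \<in> ell2 L"
  shows "l2inner (\<lambda>x. c * f x) h = cnj c * l2inner f h"
  unfolding l2inner_def
  using infsum_cmult_right[of "cnj c" "\<lambda>x. cnj (f x) * h x" UNIV] l2inner_summ[OF assms]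
  by (simp add: mult.assoc)

lemma l2inner_scale_right:
  assumes "f \<in> ell2 L" "h \<in> ell2 L"
  shows "l2inner f (\<lambda>x. c * h x) = c * l2inner f h"
  unfolding l2inner_def
  using infsum_cmult_right[of "c" "\<lambda>x. cnj (f x) * h x" UNIV] l2inner_summ[OF assms]
  by (simp add: mult.left_commute)

lemma l2inner_zero_left[simp]: "l2inner 0 g = 0" by (simp add: l2inner_def)
lemma l2inner_zero_right[simp]: "l2inner f 0 = 0" by (simp add: l2inner_def)



lemma sum_fun_apply: "(sum f A) x = sum (\<lambda>a. f a x) A"
  by (induction A rule: infinite_finite_induct) auto

lemma l2norm_0[simp]: "l2norm 0 = 0" by (simp add: l2norm_def)
lemma l2norm_0'[simp]: "l2norm (\<lambda>x. 0) = 0" by (simp add: l2norm_def)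
lemma ell2_zero'[simp]: "(\<lambda>x. 0) \<in> ell2 L" using ell2_zero by (simp add: zero_fun_def)

lemma boD:
  assumes "T \<in> bounded_ops L"
  shows bo_ell2: "f \<in> ell2 L \<Longrightarrow> T f \<in> ell2 L"
    and bo_add: "f \<in> ell2 L \<Longrightarrow> g \<in> ell2 L \<Longrightarrow> T (f + g) = T f + T g"
    and bo_scale: "f \<in> ell2 L \<Longrightarrow> T (\<lambda>x. c * f x) = (\<lambda>x. c * T f x)"
    and bo_out: "f \<notin> ell2 L \<Longrightarrow> T f = 0"
  using assms by (auto simp: bounded_ops_def)

lemma bo_bound:
  assumes "T \<in> bounded_ops L"
  shows "\<exists>C\<ge>0. \<forall>f\<in>ell2 L. l2norm (T f) \<le> C * l2norm f"
proof -
  obtain C where C: "\<forall>f\<in>ell2 L. l2norm (T f) \<le> C * l2norm f"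
    using assms by (auto simp: bounded_ops_def)
  have "\<forall>f\<in>ell2 L. l2norm (T f) \<le> max C 0 * l2norm f"
  proof
    fix f assume f: "f \<in> ell2 L"
    have "C * l2norm f \<le> max C 0 * l2norm f" by (rule mult_right_mono) (auto simp: l2norm_nonneg)
    thus "l2norm (T f) \<le> max C 0 * l2norm f" using C f by force
  qed
  thus ?thesis by (intro exI[of _ "max C 0"]) auto
qed

lemma boI:
  assumes "\<And>f. f \<in> ell2 L \<Longrightarrow> T f \<in> ell2 L"
    and "\<And>f g. f \<in> ell2 L \<Longrightarrow> g \<in> ell2 L \<Longrightarrow> T (f + g) = T f + T g"
    and "\<And>c f. f \<in> ell2 L \<Longrightarrow> T (\<lambda>x. c * f x) = (\<lambda>x. c * T f x)"
    and "\<And>f. f \<in> ell2 L \<Longrightarrow> l2norm (T f) \<le> C * l2norm f"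
    and "\<And>f. f \<notin> ell2 L \<Longrightarrow> T f = 0"
  shows "T \<in> bounded_ops L"
  using assms unfolding bounded_ops_def by blast

lemma bo_0: assumes "T \<in> bounded_ops L" shows "T 0 = 0"
proof -
  have "T (\<lambda>x. 0 * (0::vec) x) = (\<lambda>x. 0 * T 0 x)" by (rule bo_scale[OF assms]) simp
  thus ?thesis by (simp add: zero_fun_def)
qed

lemma ell2_neg: "g \<in> ell2 L \<Longrightarrow> (\<lambda>x. -1 * g x) \<in> ell2 L"
  by (rule ell2_scale)

lemma minus_as_plus: "(f::vec) - g = f + (\<lambda>x. -1 * g x)"
  by (auto simp: fun_eq_iff)

lemma ell2_diff: "f \<in> ell2 L \<Longrightarrow> g \<in> ell2 L \<Longrightarrow> f - g \<in> ell2 L"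
  unfolding minus_as_plus by (intro ell2_add ell2_neg)

lemma bo_diff:
  assumes "T \<in> bounded_ops L" "f \<in> ell2 L" "g \<in> ell2 L"
  shows "T (f - g) = T f - T g"
proof -
  have "T (f + (\<lambda>x. -1 * g x)) = T f + T (\<lambda>x. -1 * g x)"
    by (rule bo_add[OF assms(1,2) ell2_neg[OF assms(3)]])
  also have "T (\<lambda>x. -1 * g x) = (\<lambda>x. -1 * T g x)" by (rule bo_scale[OF assms(1,3)])
  finally show ?thesis unfolding minus_as_plus .
qed

lemma bo_plus:
  assumes S: "S \<in> bounded_ops L" and T: "T \<in> bounded_ops L"
  shows "S + T \<in> bounded_ops L"
proof -
  obtain C1 where C1: "C1 \<ge> 0" "\<forall>f\<in>ell2 L. l2norm (S f) \<le> C1 * l2norm f" using bo_bound[OF S] by auto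
  obtain C2 where C2: "C2 \<ge> 0" "\<forall>f\<in>ell2 L. l2norm (T f) \<le> C2 * l2norm f" using bo_bound[OF T] by auto
  show ?thesis
  proof (rule boI[where C = "2 * (C1 + C2)"])
    fix f assume f: "f \<in> ell2 L"
    show "(S + T) f \<in> ell2 L" using f by (simp add: ell2_add bo_ell2[OF S] bo_ell2[OF T])
    have "l2norm (S f + T f) \<le> 2 * (l2norm (S f) + l2norm (T f))"
      by (rule ell2_add(2)[OF bo_ell2[OF S f] bo_ell2[OF T f]])
    also have "\<dots> \<le> 2 * (C1 * l2norm f + C2 * l2norm f)"
    proof -
      have "l2norm (S f) \<le> C1 * l2norm f" "l2norm (T f) \<le> C2 * l2norm f" using C1(2) C2(2) f by auto
      thus ?thesis by (intro mult_left_mono add_mono) auto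
    qed
    finally show "l2norm ((S + T) f) \<le> 2 * (C1 + C2) * l2norm f" by (simp add: algebra_simps)
  next
    fix f g assume "f \<in> ell2 L" "g \<in> ell2 L"
    thus "(S + T) (f + g) = (S + T) f + (S + T) g"
      by (simp add: bo_add[OF S] bo_add[OF T] algebra_simps)
  next
    fix c f assume "f \<in> ell2 L"
    thus "(S + T) (\<lambda>x. c * f x) = (\<lambda>x. c * (S + T) f x)"
      by (simp add: bo_scale[OF S] bo_scale[OF T] fun_eq_iff algebra_simps)
  next
    fix f assume "f \<notin> ell2 L"
    thus "(S + T) f = 0" by (simp add: bo_out[OF S] bo_out[OF T])
  qed
qed

lemma bo_opscale:
  assumes T: "T \<in> bounded_ops L"
  shows "opscale c T \<in> bounded_ops L"
proof -
  obtain C where C: "C \<ge> 0" "\<forall>f\<in>ell2 L. l2norm (T f) \<le> C * l2norm f" using bo_bound[OF T] by auto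
  show ?thesis
  proof (rule boI[where C = "cmod c * C"])
    fix f assume f: "f \<in> ell2 L"
    show "opscale c T f \<in> ell2 L" unfolding opscale_def by (rule ell2_scale) (rule bo_ell2[OF T f])
    have "l2norm (opscale c T f) = cmod c * l2norm (T f)"
      unfolding opscale_def by (rule ell2_scale) (rule bo_ell2[OF T f])
    also have "\<dots> \<le> cmod c * (C * l2norm f)" using C f by (simp add: mult_left_mono)
    finally show "l2norm (opscale c T f) \<le> cmod c * C * l2norm f" by simp
  next
    fix f g assume "f \<in> ell2 L" "g \<in> ell2 L"
    thus "opscale c T (f + g) = opscale c T f + opscale c T g"
      by (simp add: opscale_def bo_add[OF T] fun_eq_iff algebra_simps)
  next
    fix c' f assume "f \<in> ell2 L"
    thus "opscale c T (\<lambda>x. c' * f x) = (\<lambda>x. c' * opscale c T f x)"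
      by (simp add: opscale_def bo_scale[OF T] fun_eq_iff algebra_simps)
  next
    fix f assume "f \<notin> ell2 L"
    thus "opscale c T f = 0" by (simp add: opscale_def bo_out[OF T] fun_eq_iff)
  qed
qed

lemma opscale_m1: "opscale (-1) T = - T"
  by (auto simp: opscale_def fun_eq_iff)

lemma bo_uminus: "T \<in> bounded_ops L \<Longrightarrow> - T \<in> bounded_ops L"
  using bo_opscale[of T L "-1"] by (simp add: opscale_m1)

lemma bo_minus:
  "S \<in> bounded_ops L \<Longrightarrow> T \<in> bounded_ops L \<Longrightarrow> S - T \<in> bounded_ops L"
  using bo_plus[OF _ bo_uminus, of S L T] by simp

lemma bo_comp:
  assumes S: "S \<in> bounded_ops L" and T: "T \<in> bounded_ops L"
  shows "S \<circ> T \<in> bounded_ops L"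
proof -
  obtain C1 where C1: "C1 \<ge> 0" "\<forall>f\<in>ell2 L. l2norm (S f) \<le> C1 * l2norm f" using bo_bound[OF S] by auto
  obtain C2 where C2: "C2 \<ge> 0" "\<forall>f\<in>ell2 L. l2norm (T f) \<le> C2 * l2norm f" using bo_bound[OF T] by auto
  show ?thesis
  proof (rule boI[where C = "C1 * C2"])
    fix f assume f: "f \<in> ell2 L"
    show "(S \<circ> T) f \<in> ell2 L" using f by (simp add: bo_ell2[OF S] bo_ell2[OF T])
    have "l2norm (S (T f)) \<le> C1 * l2norm (T f)" using C1 bo_ell2[OF T f] by auto
    also have "\<dots> \<le> C1 * (C2 * l2norm f)" using C1 C2 f by (simp add: mult_left_mono)
    finally show "l2norm ((S \<circ> T) f) \<le> C1 * C2 * l2norm f" by simp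
  next
    fix f g assume "f \<in> ell2 L" "g \<in> ell2 L"
    thus "(S \<circ> T) (f + g) = (S \<circ> T) f + (S \<circ> T) g"
      by (simp add: bo_add[OF S] bo_add[OF T] bo_ell2[OF T])
  next
    fix c f assume "f \<in> ell2 L"
    thus "(S \<circ> T) (\<lambda>x. c * f x) = (\<lambda>x. c * (S \<circ> T) f x)"
      by (simp add: bo_scale[OF S] bo_scale[OF T] bo_ell2[OF T])
  next
    fix f assume "f \<notin> ell2 L"
    thus "(S \<circ> T) f = 0" by (simp add: bo_out[OF T] bo_0[OF S])
  qed
qed

lemma bo_zero: "(0::op) \<in> bounded_ops L"
  by (rule boI[where C=0]) (auto simp: zero_fun_def)

lemma bo_idop: "idop L \<in> bounded_ops L"
  by (rule boI[where C=1]) (auto simp: idop_def ell2_add ell2_scale zero_fun_def)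

lemma bo_sum: "finite A \<Longrightarrow> (\<And>a. a \<in> A \<Longrightarrow> f a \<in> bounded_ops L) \<Longrightarrow> sum f A \<in> bounded_ops L"
  by (induction A rule: finite_induct) (auto intro: bo_zero bo_plus)

section \<open>Operator norm\<close>

lemma opn_set:
  assumes T: "T \<in> bounded_ops L"
  shows "bdd_above {l2norm (T f) | f. f \<in> ell2 L \<and> l2norm f \<le> 1}"
    "0 \<in> {l2norm (T f) | f. f \<in> ell2 L \<and> l2norm f \<le> 1}"
proof -
  obtain C where C: "C \<ge> 0" "\<forall>f\<in>ell2 L. l2norm (T f) \<le> C * l2norm f" using bo_bound[OF T] by auto
  show "bdd_above {l2norm (T f) | f. f \<in> ell2 L \<and> l2norm f \<le> 1}"
  proof (rule bdd_aboveI[where M = C], clarify)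
    fix f assume f: "f \<in> ell2 L" "l2norm f \<le> 1"
    have "l2norm (T f) \<le> C * l2norm f" using C f by auto
    also have "\<dots> \<le> C" using C f by (simp add: mult_left_le)
    finally show "l2norm (T f) \<le> C" .
  qed
  show "0 \<in> {l2norm (T f) | f. f \<in> ell2 L \<and> l2norm f \<le> 1}"
    by (rule CollectI, rule exI[of _ 0]) (simp add: bo_0[OF T])
qed

lemma opn_le1:
  assumes T: "T \<in> bounded_ops L" and f: "f \<in> ell2 L" "l2norm f \<le> 1"
  shows "l2norm (T f) \<le> opnorm L T"
  unfolding opnorm_def by (rule cSup_upper) (use f opn_set[OF T] in auto)

lemma opn_nonneg: "T \<in> bounded_ops L \<Longrightarrow> opnorm L T \<ge> 0"
  using opn_le1[of T L 0] by (simp add: bo_0 del: zero_fun_def)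

lemma opn_bound:
  assumes T: "T \<in> bounded_ops L" and f: "f \<in> ell2 L"
  shows "l2norm (T f) \<le> opnorm L T * l2norm f"
proof (cases "l2norm f = 0")
  case True
  hence "f = 0" using l2norm_zero_imp f by blast
  thus ?thesis by (simp add: bo_0[OF T])
next
  case False
  define n where "n = l2norm f"
  have n: "n > 0" using False l2norm_nonneg[of f] unfolding n_def by linarith
  define c where "c = complex_of_real (1/n)"
  have cn: "cmod c = 1/n" using n unfolding c_def by (simp del: of_real_divide)
  define g where "g = (\<lambda>x. c * f x)"
  have g: "g \<in> ell2 L" "l2norm g = 1"
    unfolding g_def using ell2_scale[OF f, of c] n cn by (auto simp: n_def)
  have "l2norm (T g) = (1/n) * l2norm (T f)"
    unfolding g_def bo_scale[OF T f] using ell2_scale(2)[OF bo_ell2[OF T f], of c] cn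
    by simp
  moreover have "l2norm (T g) \<le> opnorm L T" using opn_le1[OF T g(1)] g(2) by simp
  ultimately have "(1/n) * l2norm (T f) \<le> opnorm L T" by simp
  thus ?thesis using n unfolding n_def[symmetric] by (simp add: field_simps)
qed

lemma opn_least:
  assumes T: "T \<in> bounded_ops L" and K: "K \<ge> 0"
    and b: "\<And>f. f \<in> ell2 L \<Longrightarrow> l2norm (T f) \<le> K * l2norm f"
  shows "opnorm L T \<le> K"
  unfolding opnorm_def
proof (rule cSup_least)
  show "{l2norm (T f) | f. f \<in> ell2 L \<and> l2norm f \<le> 1} \<noteq> {}" using opn_set(2)[OF T] by blast
next
  fix x assume "x \<in> {l2norm (T f) | f. f \<in> ell2 L \<and> l2norm f \<le> 1}"
  then obtain f where f: "f \<in> ell2 L" "l2norm f \<le> 1" "x = l2norm (T f)" by auto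
  have "l2norm (T f) \<le> K * l2norm f" using b f by auto
  also have "\<dots> \<le> K" using K f by (simp add: mult_left_le)
  finally show "x \<le> K" using f by simp
qed

lemma opn_comp:
  assumes S: "S \<in> bounded_ops L" and T: "T \<in> bounded_ops L"
  shows "opnorm L (S \<circ> T) \<le> opnorm L S * opnorm L T"
proof (rule opn_least[OF bo_comp[OF S T]])
  show "0 \<le> opnorm L S * opnorm L T" using opn_nonneg S T by simp
  fix f assume f: "f \<in> ell2 L"
  have "l2norm (S (T f)) \<le> opnorm L S * l2norm (T f)" by (rule opn_bound[OF S bo_ell2[OF T f]])
  also have "\<dots> \<le> opnorm L S * (opnorm L T * l2norm f)"
    by (rule mult_left_mono[OF opn_bound[OF T f] opn_nonneg[OF S]])
  finally show "l2norm ((S \<circ> T) f) \<le> opnorm L S * opnorm L T * l2norm f" by simp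
qed

lemma opn_point:
  assumes T: "T \<in> bounded_ops L" and f: "f \<in> ell2 L"
  shows "cmod (T f x) \<le> opnorm L T * l2norm f"
  using point_le_l2norm[OF bo_ell2[OF T f], of x] opn_bound[OF T f] by linarith

lemma opn_point_ev:
  assumes T: "T \<in> bounded_ops L" and w: "w \<in> L"
  shows "cmod (T (ev w) x) \<le> opnorm L T"
  using opn_point[OF T ev_ell2[OF w]] by (simp add: l2norm_ev)

lemma pointwise_conv:
  assumes s: "\<And>n. s n \<in> bounded_ops L" and T: "T \<in> bounded_ops L"
    and lim: "(\<lambda>n. opnorm L (s n - T)) \<longlonglongrightarrow> 0" and f: "f \<in> ell2 L"
  shows "(\<lambda>n. s n f x) \<longlonglongrightarrow> T f x"
proof -
  have "(\<lambda>n. s n f x - T f x) \<longlonglongrightarrow> 0"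
  proof (rule Lim_null_comparison)
    show "\<forall>\<^sub>F n in sequentially. norm (s n f x - T f x) \<le> opnorm L (s n - T) * l2norm f"
    proof (rule always_eventually, rule allI)
      fix n
      have "norm ((s n - T) f x) \<le> opnorm L (s n - T) * l2norm f"
        by (rule opn_point[OF bo_minus[OF s T] f])
      thus "norm (s n f x - T f x) \<le> opnorm L (s n - T) * l2norm f" by simp
    qed
    show "(\<lambda>n. opnorm L (s n - T) * l2norm f) \<longlonglongrightarrow> 0"
      using tendsto_mult_left_zero[OF lim, of "l2norm f"] by simp
  qed
  thus ?thesis by (rule LIM_zero_cancel)
qed



definition takem :: "(nat \<Rightarrow> nat) \<Rightarrow> word \<Rightarrow> word" where
  "takem m v = (\<lambda>i. take (m i) (v i))"
definition dropm :: "(nat \<Rightarrow> nat) \<Rightarrow> word \<Rightarrow> word" where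
  "dropm m v = (\<lambda>i. drop (m i) (v i))"
definition eps :: word where "eps = (\<lambda>i. [])"

lemma tcat_split:
  assumes "tlen \<mu> = m"
  shows "(v = tcat \<mu> w) \<longleftrightarrow> ((\<forall>i. m i \<le> length (v i)) \<and> takem m v = \<mu> \<and> dropm m v = w)"
proof
  assume v: "v = tcat \<mu> w"
  have ml: "m i = length (\<mu> i)" for i using assms by (simp add: tlen_def fun_eq_iff)
  show "(\<forall>i. m i \<le> length (v i)) \<and> takem m v = \<mu> \<and> dropm m v = w"
    using v by (simp add: ml tcat_def takem_def dropm_def)
next
  assume h: "(\<forall>i. m i \<le> length (v i)) \<and> takem m v = \<mu> \<and> dropm m v = w"
  show "v = tcat \<mu> w"
  proof
    fix i
    have "v i = take (m i) (v i) @ drop (m i) (v i)" by simp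
    also have "\<dots> = tcat \<mu> w i" using h by (simp add: tcat_def takem_def dropm_def fun_eq_iff)
    finally show "v i = tcat \<mu> w i" .
  qed
qed

lemma tlen_tcat_drop: "dropm (tlen \<mu>) (tcat \<mu> w) = w" "takem (tlen \<mu>) (tcat \<mu> w) = \<mu>"
  using tcat_split[of \<mu> "tlen \<mu>" "tcat \<mu> w" w] by auto

lemma tcat_len: "tlen \<mu> i \<le> length (tcat \<mu> w i)"
  by (simp add: tlen_def tcat_def)

lemma tcat_inj: "tcat \<mu> w = tcat \<mu> w' \<Longrightarrow> w = w'"
  by (metis tlen_tcat_drop(1))

lemma inj_tcat: "inj (tcat \<mu>)"
  by (rule injI) (rule tcat_inj)

lemma tcat_eps[simp]: "tcat eps x = x" "tcat x eps = x"
  by (auto simp: tcat_def eps_def)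

lemma tcat_assoc: "tcat (tcat a b) c = tcat a (tcat b c)"
  by (simp add: tcat_def)

lemma fl_sub:
  assumes fl: "factorial_language d N L" and v: "tcat \<mu> w \<in> L"
  shows "\<mu> \<in> L" "w \<in> L"
proof -
  have cl: "\<forall>\<mu>\<in>L. \<forall>w \<nu> q. \<mu> = tcat (tcat w \<nu>) q \<longrightarrow> \<nu> \<in> L"
    using fl by (simp add: factorial_language_def)
  show "\<mu> \<in> L" using cl v by (metis tcat_eps(1))
  show "w \<in> L" using cl v by (metis tcat_eps(2))
qed

section \<open>Shift operators\<close>

definition Rs :: "word set \<Rightarrow> word \<Rightarrow> op" where
  "Rs L \<mu> = (\<lambda>g. if g \<in> ell2 L then (\<lambda>w. if w \<in> L \<and> tcat \<mu> w \<in> L then g (tcat \<mu> w) else 0) else 0)"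

lemma shift_on_range:
  assumes f: "f \<in> ell2 L"
  shows "shift L \<mu> f (tcat \<mu> w) = (if tcat \<mu> w \<in> L \<and> w \<in> L then f w else 0)"
proof -
  have the: "(THE w'. tcat \<mu> w = tcat \<mu> w') = w"
    by (rule the_equality) (auto dest: tcat_inj)
  show ?thesis using f by (auto simp: shift_def the dest: tcat_inj)
qed

lemma shift_off_range:
  assumes "\<And>w. v \<noteq> tcat \<mu> w"
  shows "shift L \<mu> f v = 0"
  using assms by (auto simp: shift_def)

lemma range_cases: "(\<exists>w. v = tcat \<mu> w) \<or> (\<forall>w. v \<noteq> tcat \<mu> w)" by blast

lemma shift_ev:
  assumes "w \<in> L" "tcat \<mu> w \<in> L"
  shows "shift L \<mu> (ev w) = ev (tcat \<mu> w)"
proof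
  fix v
  show "shift L \<mu> (ev w) v = ev (tcat \<mu> w) v"
  proof (cases "\<exists>w'. v = tcat \<mu> w'")
    case True
    then obtain w' where v: "v = tcat \<mu> w'" by auto
    show ?thesis using assms unfolding v shift_on_range[OF ev_ell2[OF assms(1)]]
      by (auto simp: ev_def dest: tcat_inj)
  next
    case False
    thus ?thesis by (auto simp: shift_off_range ev_def)
  qed
qed

lemma shift_ell2:
  assumes f: "f \<in> ell2 L"
  shows "shift L \<mu> f \<in> ell2 L" "l2norm (shift L \<mu> f) \<le> l2norm f"
proof -
  define h where "h = (\<lambda>v. (cmod (shift L \<mu> f v))^2)"
  have hc: "h (tcat \<mu> w) = (if tcat \<mu> w \<in> L \<and> w \<in> L then (cmod (f w))^2 else 0)" for w
    by (simp add: h_def shift_on_range[OF f])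
  have hz: "h v = 0" if "v \<in> UNIV - range (tcat \<mu>)" for v
  proof -
    have "\<And>w. v \<noteq> tcat \<mu> w" using that by auto
    thus ?thesis by (simp add: h_def shift_off_range)
  qed
  have s1: "(h \<circ> tcat \<mu>) summable_on UNIV"
    by (rule summable_on_comparison_test[OF ell2_summ[OF f]]) (auto simp: hc)
  hence s2: "h summable_on range (tcat \<mu>)" by (simp add: summable_on_reindex[OF inj_tcat])
  have eq: "h summable_on UNIV \<longleftrightarrow> h summable_on range (tcat \<mu>)"
    by (rule summable_on_cong_neutral) (use hz in auto)
  have s3: "h summable_on UNIV" using eq s2 by simp
  show "shift L \<mu> f \<in> ell2 L" using s3 unfolding ell2_def h_def by (auto simp: shift_def)
  have "infsum h UNIV = infsum h (range (tcat \<mu>))"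
    by (rule infsum_cong_neutral) (use hz in auto)
  also have "\<dots> = infsum (h \<circ> tcat \<mu>) UNIV" by (rule infsum_reindex[OF inj_tcat])
  also have "\<dots> \<le> (\<Sum>\<^sub>\<infinity>w. (cmod (f w))^2)"
    by (rule infsum_mono[OF s1 ell2_summ[OF f]]) (auto simp: hc)
  finally show "l2norm (shift L \<mu> f) \<le> l2norm f"
    unfolding l2norm_def h_def by (rule real_sqrt_le_mono)
qed

lemma Rs_ell2:
  assumes g: "g \<in> ell2 L"
  shows "Rs L \<mu> g \<in> ell2 L" "l2norm (Rs L \<mu> g) \<le> l2norm g"
proof -
  define G where "G = (\<lambda>v. (cmod (g v))^2)"
  have sG: "G summable_on UNIV" using ell2_summ[OF g] by (simp add: G_def)
  have sG2: "G summable_on range (tcat \<mu>)" by (rule summable_on_subset[OF sG]) auto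
  hence s1: "(G \<circ> tcat \<mu>) summable_on UNIV" by (simp add: summable_on_reindex[OF inj_tcat])
  have le: "(cmod (Rs L \<mu> g w))^2 \<le> (G \<circ> tcat \<mu>) w" for w
    using g by (simp add: Rs_def G_def)
  have s2: "(\<lambda>w. (cmod (Rs L \<mu> g w))^2) summable_on UNIV"
    by (rule summable_on_comparison_test[OF s1]) (use le in auto)
  show "Rs L \<mu> g \<in> ell2 L" using s2 g unfolding ell2_def by (auto simp: Rs_def)
  have "(\<Sum>\<^sub>\<infinity>w. (cmod (Rs L \<mu> g w))^2) \<le> infsum (G \<circ> tcat \<mu>) UNIV"
    by (rule infsum_mono[OF s2 s1]) (use le in auto)
  also have "\<dots> = infsum G (range (tcat \<mu>))" by (rule infsum_reindex[OF inj_tcat, symmetric])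
  also have "\<dots> \<le> infsum G UNIV"
    by (rule infsum_mono_neutral[OF sG2 sG]) (auto simp: G_def)
  finally show "l2norm (Rs L \<mu> g) \<le> l2norm g"
    unfolding l2norm_def G_def by (rule real_sqrt_le_mono)
qed

lemma shift_bo: "shift L \<mu> \<in> bounded_ops L"
proof (rule boI[where C=1])
  fix f assume f: "f \<in> ell2 L"
  show "shift L \<mu> f \<in> ell2 L" by (rule shift_ell2[OF f])
  show "l2norm (shift L \<mu> f) \<le> 1 * l2norm f" using shift_ell2(2)[OF f] by simp
next
  fix f g assume "f \<in> ell2 L" "g \<in> ell2 L"
  thus "shift L \<mu> (f + g) = shift L \<mu> f + shift L \<mu> g"
    by (auto simp: shift_def ell2_add fun_eq_iff)
next
  fix c f assume "f \<in> ell2 L"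
  thus "shift L \<mu> (\<lambda>x. c * f x) = (\<lambda>x. c * shift L \<mu> f x)"
    by (auto simp: shift_def ell2_scale fun_eq_iff)
next
  fix f assume "f \<notin> ell2 L"
  thus "shift L \<mu> f = 0" by (simp add: shift_def)
qed

lemma Rs_bo: "Rs L \<mu> \<in> bounded_ops L"
proof (rule boI[where C=1])
  fix f assume f: "f \<in> ell2 L"
  show "Rs L \<mu> f \<in> ell2 L" by (rule Rs_ell2[OF f])
  show "l2norm (Rs L \<mu> f) \<le> 1 * l2norm f" using Rs_ell2(2)[OF f] by simp
next
  fix f g assume "f \<in> ell2 L" "g \<in> ell2 L"
  thus "Rs L \<mu> (f + g) = Rs L \<mu> f + Rs L \<mu> g"
    by (auto simp: Rs_def ell2_add fun_eq_iff)
next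
  fix c f assume "f \<in> ell2 L"
  thus "Rs L \<mu> (\<lambda>x. c * f x) = (\<lambda>x. c * Rs L \<mu> f x)"
    by (auto simp: Rs_def ell2_scale fun_eq_iff)
next
  fix f assume "f \<notin> ell2 L"
  thus "Rs L \<mu> f = 0" by (simp add: Rs_def)
qed

lemma shift_Rs_inner:
  assumes f: "f \<in> ell2 L" and g: "g \<in> ell2 L"
  shows "l2inner (Rs L \<mu> f) g = l2inner f (shift L \<mu> g)"
proof -
  define k where "k = (\<lambda>v. cnj (f v) * shift L \<mu> g v)"
  have kz: "k v = 0" if "v \<in> UNIV - range (tcat \<mu>)" for v
  proof -
    have "\<And>w. v \<noteq> tcat \<mu> w" using that by auto
    thus ?thesis by (simp add: k_def shift_off_range)
  qed
  have "l2inner f (shift L \<mu> g) = infsum k UNIV" by (simp add: l2inner_def k_def)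
  also have "\<dots> = infsum k (range (tcat \<mu>))"
    by (rule infsum_cong_neutral) (use kz in auto)
  also have "\<dots> = infsum (k \<circ> tcat \<mu>) UNIV" by (rule infsum_reindex[OF inj_tcat])
  also have "\<dots> = l2inner (Rs L \<mu> f) g"
    unfolding l2inner_def using f g
    by (intro infsum_cong) (auto simp: k_def Rs_def shift_on_range[OF g])
  finally show ?thesis by simp
qed

definition adjp :: "word set \<Rightarrow> op \<Rightarrow> op \<Rightarrow> bool" where
  "adjp L T S \<longleftrightarrow> S \<in> bounded_ops L \<and>
     (\<forall>f\<in>ell2 L. \<forall>g\<in>ell2 L. l2inner (S f) g = l2inner f (T g))"

lemma adjp_unique:
  assumes "adjp L T S1" "adjp L T S2" shows "S1 = S2"
proof
  fix f
  have S1: "S1 \<in> bounded_ops L" and S2: "S2 \<in> bounded_ops L" using assms by (auto simp: adjp_def)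
  show "S1 f = S2 f"
  proof (cases "f \<in> ell2 L")
    case False thus ?thesis by (simp add: bo_out[OF S1] bo_out[OF S2])
  next
    case f: True
    show ?thesis
    proof
      fix x
      show "S1 f x = S2 f x"
      proof (cases "x \<in> L")
        case False thus ?thesis using ell2_vanish[OF bo_ell2[OF S1 f]] ell2_vanish[OF bo_ell2[OF S2 f]] by simp
      next
        case True
        have "l2inner (S1 f) (ev x) = l2inner (S2 f) (ev x)"
          using assms f ev_ell2[OF True] by (simp add: adjp_def)
        thus ?thesis by (simp add: l2inner_ev)
      qed
    qed
  qed
qed

lemma adjoint_eq: "adjp L T S \<Longrightarrow> adjoint L T = S"
  unfolding adjoint_def
  by (rule the_equality) (auto simp: adjp_def[symmetric] intro: adjp_unique)

lemma adjp_bo: "adjp L T S \<Longrightarrow> S \<in> bounded_ops L" by (simp add: adjp_def)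

lemma adjp_shift: "adjp L (shift L \<mu>) (Rs L \<mu>)"
  by (simp add: adjp_def Rs_bo shift_Rs_inner)

lemma adjp_comp:
  assumes "adjp L T1 S1" "adjp L T2 S2" "T2 \<in> bounded_ops L"
  shows "adjp L (T1 \<circ> T2) (S2 \<circ> S1)"
  using assms unfolding adjp_def
  by (auto intro: bo_comp simp: bo_ell2)

lemma adjp_plus:
  assumes "adjp L T1 S1" "adjp L T2 S2" "T1 \<in> bounded_ops L" "T2 \<in> bounded_ops L"
  shows "adjp L (T1 + T2) (S1 + S2)"
proof -
  have S1: "S1 \<in> bounded_ops L" and S2: "S2 \<in> bounded_ops L" using assms by (auto simp: adjp_def)
  show ?thesis unfolding adjp_def
  proof (intro conjI ballI)
    show "S1 + S2 \<in> bounded_ops L" by (rule bo_plus[OF S1 S2])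
    fix f g assume f: "f \<in> ell2 L" and g: "g \<in> ell2 L"
    have "l2inner ((S1 + S2) f) g = l2inner (S1 f) g + l2inner (S2 f) g"
      by (simp add: l2inner_add_left[OF bo_ell2[OF S1 f] bo_ell2[OF S2 f] g])
    also have "\<dots> = l2inner f (T1 g) + l2inner f (T2 g)" using assms f g by (simp add: adjp_def)
    also have "\<dots> = l2inner f ((T1 + T2) g)"
      by (simp add: l2inner_add_right[OF f bo_ell2[OF assms(3) g] bo_ell2[OF assms(4) g]])
    finally show "l2inner ((S1 + S2) f) g = l2inner f ((T1 + T2) g)" .
  qed
qed

lemma adjp_zero: "adjp L 0 0"
proof -
  have "(0::op) \<in> bounded_ops L" by (rule bo_zero)
  moreover have "\<forall>f\<in>ell2 L. \<forall>g\<in>ell2 L. l2inner ((0::op) f) g = l2inner f ((0::op) g)"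
    by (simp add: l2inner_def)
  ultimately show ?thesis unfolding adjp_def by blast
qed

lemma adjp_sum:
  "finite A \<Longrightarrow> (\<And>a. a \<in> A \<Longrightarrow> adjp L (T a) (S a)) \<Longrightarrow> (\<And>a. a \<in> A \<Longrightarrow> T a \<in> bounded_ops L)
   \<Longrightarrow> adjp L (sum T A) (sum S A)"
proof (induction A rule: finite_induct)
  case empty show ?case unfolding sum.empty by (rule adjp_zero)
next
  case (insert a A)
  have "adjp L (T a + sum T A) (S a + sum S A)"
    by (rule adjp_plus) (use insert in \<open>auto intro: bo_sum\<close>)
  thus ?case unfolding sum.insert[OF insert(1,2)] .
qed



section \<open>Diagonal operators\<close>

definition mop :: "word set \<Rightarrow> (word \<Rightarrow> complex) \<Rightarrow> op" where
  "mop L c = (\<lambda>f. if f \<in> ell2 L then (\<lambda>v. c v * f v) else 0)"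

definition bnd :: "word set \<Rightarrow> (word \<Rightarrow> complex) \<Rightarrow> bool" where
  "bnd L c \<longleftrightarrow> (\<exists>B. \<forall>v\<in>L. cmod (c v) \<le> B)"

definition dg :: "op \<Rightarrow> word \<Rightarrow> complex" where
  "dg a v = a (ev v) v"

lemma mult_ell2:
  assumes f: "f \<in> ell2 L" and B: "\<forall>v\<in>L. cmod (c v) \<le> B"
  shows "mop L c f \<in> ell2 L" "l2norm (mop L c f) \<le> \<bar>B\<bar> * l2norm f"
proof -
  have le: "cmod (c v * f v) \<le> B * cmod (f v)" for v
  proof (cases "v \<in> L")
    case True thus ?thesis using B by (simp add: norm_mult mult_right_mono)
  next
    case False thus ?thesis using ell2_vanish[OF f] by simp
  qed
  have van: "v \<notin> L \<Longrightarrow> c v * f v = 0" for v using ell2_vanish[OF f] by simp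
  show "mop L c f \<in> ell2 L" using ell2_dom(1)[OF f, of "\<lambda>v. c v * f v", OF le van] f
    by (simp add: mop_def)
  show "l2norm (mop L c f) \<le> \<bar>B\<bar> * l2norm f"
    using ell2_dom(2)[OF f, of "\<lambda>v. c v * f v", OF le van] f by (simp add: mop_def)
qed

lemma mult_bo:
  assumes B: "\<forall>v\<in>L. cmod (c v) \<le> B"
  shows "mop L c \<in> bounded_ops L"
proof (rule boI[where C="\<bar>B\<bar>"])
  fix f assume f: "f \<in> ell2 L"
  show "mop L c f \<in> ell2 L" by (rule mult_ell2(1)[OF f B])
  show "l2norm (mop L c f) \<le> \<bar>B\<bar> * l2norm f" by (rule mult_ell2(2)[OF f B])
next
  fix f g assume "f \<in> ell2 L" "g \<in> ell2 L"
  thus "mop L c (f + g) = mop L c f + mop L c g"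
    by (simp add: mop_def ell2_add fun_eq_iff algebra_simps)
next
  fix k f assume "f \<in> ell2 L"
  thus "mop L c (\<lambda>x. k * f x) = (\<lambda>x. k * mop L c f x)"
    by (simp add: mop_def ell2_scale fun_eq_iff algebra_simps)
next
  fix f assume "f \<notin> ell2 L"
  thus "mop L c f = 0" by (simp add: mop_def)
qed

lemma mult_bo': "bnd L c \<Longrightarrow> mop L c \<in> bounded_ops L"
  unfolding bnd_def using mult_bo by blast

lemma mult_opnorm:
  assumes B: "\<forall>v\<in>L. cmod (c v) \<le> B" and B0: "B \<ge> 0"
  shows "opnorm L (mop L c) \<le> B"
  by (rule opn_least[OF mult_bo[OF B] B0]) (use mult_ell2(2)[OF _ B] B0 in auto)

lemma mult_cong:
  assumes "\<And>v. v \<in> L \<Longrightarrow> c v = c' v"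
  shows "mop L c = mop L c'"
proof
  fix f show "mop L c f = mop L c' f"
    using assms by (auto simp: mop_def fun_eq_iff dest: ell2_vanish)
qed

lemma mult_comp:
  assumes "bnd L c'"
  shows "mop L c \<circ> mop L c' = mop L (\<lambda>v. c v * c' v)"
proof
  fix f
  show "(mop L c \<circ> mop L c') f = mop L (\<lambda>v. c v * c' v) f"
  proof (cases "f \<in> ell2 L")
    case True
    have "mop L c' f \<in> ell2 L" using assms True unfolding bnd_def by (auto intro: mult_ell2)
    thus ?thesis using True by (simp add: mop_def fun_eq_iff)
  next
    case False
    have "(0::vec) \<in> ell2 L" by simp
    thus ?thesis using False by (simp add: mop_def fun_eq_iff)
  qed
qed

lemma mult_plus: "mop L c + mop L c' = mop L (\<lambda>v. c v + c' v)"
  by (auto simp: mop_def fun_eq_iff algebra_simps)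

lemma mult_minus: "mop L c - mop L c' = mop L (\<lambda>v. c v - c' v)"
  by (auto simp: mop_def fun_eq_iff algebra_simps)

lemma mult_opscale: "opscale k (mop L c) = mop L (\<lambda>v. k * c v)"
  by (auto simp: mop_def opscale_def fun_eq_iff algebra_simps)

lemma mult_zero: "mop L (\<lambda>v. 0) = 0"
  by (auto simp: mop_def fun_eq_iff)

lemma idop_mult: "idop L = mop L (\<lambda>v. 1)"
  by (auto simp: mop_def idop_def fun_eq_iff)

lemma adjp_mult:
  assumes "bnd L c"
  shows "adjp L (mop L c) (mop L (\<lambda>v. cnj (c v)))"
proof -
  have "bnd L (\<lambda>v. cnj (c v))" using assms by (simp add: bnd_def)
  hence "mop L (\<lambda>v. cnj (c v)) \<in> bounded_ops L" by (rule mult_bo')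
  thus ?thesis unfolding adjp_def
    by (auto simp: mop_def l2inner_def mult.commute mult.left_commute)
qed

lemma ev_notin: "v \<notin> L \<Longrightarrow> ev v \<notin> ell2 L"
  by (auto simp: ell2_def ev_def)

lemma dg_mult: "v \<in> L \<Longrightarrow> dg (mop L c) v = c v"
  by (simp add: dg_def mop_def ev_ell2) (simp add: ev_def)

lemma dg_bound:
  assumes a: "a \<in> bounded_ops L"
  shows "cmod (dg a v) \<le> opnorm L a"
proof (cases "v \<in> L")
  case True thus ?thesis unfolding dg_def by (rule opn_point_ev[OF a])
next
  case False thus ?thesis using opn_nonneg[OF a] bo_out[OF a ev_notin[OF False]] by (simp add: dg_def)
qed

lemma dg_plus: "dg (a + b) v = dg a v + dg b v" by (simp add: dg_def)
lemma dg_minus: "dg (a - b) v = dg a v - dg b v" by (simp add: dg_def)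
lemma dg_opscale: "dg (opscale k a) v = k * dg a v" by (simp add: dg_def opscale_def)

definition Dset :: "word set \<Rightarrow> op set" where
  "Dset L = {a \<in> bounded_ops L. a = mop L (dg a)}"

lemma bnd_dg: "a \<in> bounded_ops L \<Longrightarrow> bnd L (dg a)"
  unfolding bnd_def using dg_bound by blast

lemma D_bo: "a \<in> Dset L \<Longrightarrow> a \<in> bounded_ops L" by (simp add: Dset_def)
lemma D_eq: "a \<in> Dset L \<Longrightarrow> a = mop L (dg a)" by (simp add: Dset_def)
lemma D_bnd: "a \<in> Dset L \<Longrightarrow> bnd L (dg a)" by (simp add: Dset_def bnd_dg)

lemma mult_D: "bnd L c \<Longrightarrow> mop L c \<in> Dset L"
  unfolding Dset_def by (auto intro: mult_bo' mult_cong simp: dg_mult)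

lemma dg_of_D: "a \<in> Dset L \<Longrightarrow> v \<in> L \<Longrightarrow> dg a v = dg a v" by simp

lemma D_plus: "a \<in> Dset L \<Longrightarrow> b \<in> Dset L \<Longrightarrow> a + b \<in> Dset L"
proof -
  assume a: "a \<in> Dset L" and b: "b \<in> Dset L"
  have "a + b = mop L (dg a) + mop L (dg b)" using D_eq[OF a] D_eq[OF b] by simp
  also have "\<dots> = mop L (dg (a + b))" unfolding mult_plus by (rule mult_cong) (simp add: dg_plus)
  finally show ?thesis unfolding Dset_def using bo_plus[OF D_bo[OF a] D_bo[OF b]] by simp
qed

lemma D_opscale: "a \<in> Dset L \<Longrightarrow> opscale k a \<in> Dset L"
proof -
  assume a: "a \<in> Dset L"
  have "opscale k a = opscale k (mop L (dg a))" using D_eq[OF a] by simp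
  also have "\<dots> = mop L (dg (opscale k a))" unfolding mult_opscale by (rule mult_cong) (simp add: dg_opscale)
  finally show ?thesis unfolding Dset_def using bo_opscale[OF D_bo[OF a]] by simp
qed

lemma D_comp: "a \<in> Dset L \<Longrightarrow> b \<in> Dset L \<Longrightarrow> a \<circ> b \<in> Dset L"
proof -
  assume a: "a \<in> Dset L" and b: "b \<in> Dset L"
  have "a \<circ> b = mop L (dg a) \<circ> mop L (dg b)" using D_eq[OF a] D_eq[OF b] by simp
  also have "\<dots> = mop L (\<lambda>v. dg a v * dg b v)" by (rule mult_comp[OF D_bnd[OF b]])
  finally have e: "a \<circ> b = mop L (\<lambda>v. dg a v * dg b v)" .
  have "bnd L (\<lambda>v. dg a v * dg b v)"
  proof -
    have "cmod (dg a v * dg b v) \<le> opnorm L a * opnorm L b" for v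
      unfolding norm_mult by (intro mult_mono dg_bound D_bo a b) (auto intro: opn_nonneg D_bo a)
    thus ?thesis by (auto simp: bnd_def)
  qed
  thus ?thesis unfolding e by (rule mult_D)
qed

lemma adjoint_D: "a \<in> Dset L \<Longrightarrow> adjoint L a = mop L (\<lambda>v. cnj (dg a v))"
proof -
  assume a: "a \<in> Dset L"
  have "adjp L (mop L (dg a)) (mop L (\<lambda>v. cnj (dg a v)))" by (rule adjp_mult[OF D_bnd[OF a]])
  hence "adjp L a (mop L (\<lambda>v. cnj (dg a v)))" using D_eq[OF a] by simp
  thus ?thesis by (rule adjoint_eq)
qed

lemma D_adjoint: "a \<in> Dset L \<Longrightarrow> adjoint L a \<in> Dset L"
proof -
  assume a: "a \<in> Dset L"
  have "bnd L (\<lambda>v. cnj (dg a v))" using D_bnd[OF a] by (simp add: bnd_def)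
  thus ?thesis using adjoint_D[OF a] mult_D by simp
qed

lemma D_idop: "idop L \<in> Dset L"
  unfolding idop_mult by (rule mult_D) (auto simp: bnd_def)

lemma D_zero: "(0::op) \<in> Dset L"
proof -
  have "mop L (\<lambda>v. 0) \<in> Dset L" by (rule mult_D) (auto simp: bnd_def)
  thus ?thesis by (simp add: mult_zero)
qed

lemma D_limit:
  assumes s: "\<And>n. s n \<in> Dset L" and T: "T \<in> bounded_ops L"
    and lim: "(\<lambda>n. opnorm L (s n - T)) \<longlonglongrightarrow> 0"
  shows "T \<in> Dset L"
proof -
  have sb: "\<And>n. s n \<in> bounded_ops L" using s D_bo by blast
  have "T = mop L (dg T)"
  proof
    fix f show "T f = mop L (dg T) f"
    proof (cases "f \<in> ell2 L")
      case False thus ?thesis by (simp add: bo_out[OF T] mop_def)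
    next
      case f: True
      show ?thesis
      proof
        fix v show "T f v = mop L (dg T) f v"
        proof (cases "v \<in> L")
          case False thus ?thesis using ell2_vanish[OF bo_ell2[OF T f] False] ell2_vanish[OF f False]
            by (simp add: mop_def)
        next
          case v: True
          have l1: "(\<lambda>n. s n f v) \<longlonglongrightarrow> T f v" by (rule pointwise_conv[OF sb T lim f])
          have l2: "(\<lambda>n. s n (ev v) v) \<longlonglongrightarrow> T (ev v) v" by (rule pointwise_conv[OF sb T lim ev_ell2[OF v]])
          have eq: "s n f v = s n (ev v) v * f v" for n
          proof -
            have "s n f v = mop L (dg (s n)) f v" using D_eq[OF s] by metis
            thus ?thesis using f by (simp add: mop_def dg_def)
          qed
          have l3: "(\<lambda>n. s n f v) \<longlonglongrightarrow> T (ev v) v * f v"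
            unfolding eq by (intro tendsto_mult l2 tendsto_const)
          have "T f v = T (ev v) v * f v" using LIMSEQ_unique[OF l1 l3] .
          thus ?thesis using f by (simp add: mop_def dg_def)
        qed
      qed
    qed
  qed
  thus ?thesis using T by (simp add: Dset_def)
qed



definition Pm :: "nat \<Rightarrow> nat \<Rightarrow> (nat \<Rightarrow> nat) \<Rightarrow> word set" where
  "Pm d N m = {\<mu> \<in> words d N. tlen \<mu> = m}"

lemma Pm_tlen0: "x \<in> Pm d N m \<Longrightarrow> tlen x = m" by (simp add: Pm_def)

lemma finite_Pm: "finite (Pm d N m)"
proof -
  define S where "S i = {xs. set xs \<subseteq> {1..d} \<and> length xs = m i}" for i
  have fS: "finite (PiE {1..N} S)" by (rule finite_PiE) (auto simp: S_def finite_lists_length_eq)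
  have sub: "(\<lambda>\<mu>. restrict \<mu> {1..N}) ` Pm d N m \<subseteq> PiE {1..N} S"
  proof (rule image_subsetI)
    fix x assume x: "x \<in> Pm d N m"
    have "x i \<in> S i" for i
    proof -
      have "length (x i) = m i" using fun_cong[OF Pm_tlen0[OF x], of i] by (simp add: tlen_def)
      moreover have "set (x i) \<subseteq> {1..d}" using x by (simp add: Pm_def words_def)
      ultimately show ?thesis by (simp add: S_def)
    qed
    thus "restrict x {1..N} \<in> PiE {1..N} S" by (simp add: restrict_PiE_iff)
  qed
  have inj: "inj_on (\<lambda>\<mu>. restrict \<mu> {1..N}) (Pm d N m)"
  proof (rule inj_onI)
    fix x y assume x: "x \<in> Pm d N m" and y: "y \<in> Pm d N m"
      and e: "restrict x {1..N} = restrict y {1..N}"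
    show "x = y"
    proof
      fix i show "x i = y i"
      proof (cases "i \<in> {1..N}")
        case True thus ?thesis using e by (metis restrict_apply')
      next
        case False thus ?thesis using x y by (auto simp: Pm_def words_def)
      qed
    qed
  qed
  show ?thesis by (rule finite_imageD[OF finite_subset[OF sub fS] inj])
qed

lemma takem_Pm:
  assumes "v \<in> words d N" "\<forall>i. m i \<le> length (v i)"
  shows "takem m v \<in> Pm d N m"
proof -
  have "set (take (m i) (v i)) \<subseteq> {1..d}" for i
    using assms(1) set_take_subset[of "m i" "v i"] by (auto simp: words_def)
  moreover have "i \<notin> {1..N} \<Longrightarrow> take (m i) (v i) = []" for i using assms(1) by (auto simp: words_def)
  moreover have "(\<lambda>i. length (take (m i) (v i))) = m" using assms(2) by (auto simp: fun_eq_iff min_def intro: antisym)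
  ultimately show ?thesis unfolding Pm_def words_def tlen_def takem_def by auto
qed

lemma Pm_tlen: "\<kappa> \<in> Pm d N m \<Longrightarrow> tlen \<kappa> = m" by (simp add: Pm_def)

lemma fl_words: "factorial_language d N L \<Longrightarrow> L \<subseteq> words d N"
  by (simp add: factorial_language_def)

section \<open>Weighted shifts\<close>

definition wg :: "word set \<Rightarrow> (nat \<Rightarrow> nat) \<Rightarrow> word \<Rightarrow> bool" where
  "wg L m v \<longleftrightarrow> v \<in> L \<and> (\<forall>i. m i \<le> length (v i)) \<and> dropm m v \<in> L"

definition wop :: "word set \<Rightarrow> (nat \<Rightarrow> nat) \<Rightarrow> (word \<Rightarrow> complex) \<Rightarrow> op" where
  "wop L m c = (\<lambda>f. if f \<in> ell2 L then (\<lambda>v. if wg L m v then c v * f (dropm m v) else 0) else 0)"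

definition wtx :: "word set \<Rightarrow> (nat \<Rightarrow> nat) \<Rightarrow> op \<Rightarrow> word \<Rightarrow> complex" where
  "wtx L m \<xi> v = \<xi> (ev (dropm m v)) v"

definition clam :: "word set \<Rightarrow> (word \<Rightarrow> complex) \<Rightarrow> word \<Rightarrow> word \<Rightarrow> complex" where
  "clam L c \<kappa> = (\<lambda>w. if tcat \<kappa> w \<in> L then c (tcat \<kappa> w) else 0)"

lemma bnd_clam: "bnd L c \<Longrightarrow> bnd L (clam L c \<kappa>)"
proof -
  assume "bnd L c"
  then obtain B where B: "\<forall>v\<in>L. cmod (c v) \<le> B" by (auto simp: bnd_def)
  have "\<forall>w\<in>L. cmod (clam L c \<kappa> w) \<le> max B 0"
    using B by (auto simp: clam_def intro: le_max_iff_disj[THEN iffD2])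
  thus ?thesis by (auto simp: bnd_def)
qed

lemma shift_mop_at:
  assumes \<kappa>: "tlen \<kappa> = m" and f: "f \<in> ell2 L" and c: "bnd L c'"
  shows "shift L \<kappa> (mop L c' f) v =
     (if wg L m v \<and> takem m v = \<kappa> then c' (dropm m v) * f (dropm m v) else 0)"
proof -
  have f': "mop L c' f \<in> ell2 L"
    using c f unfolding bnd_def by (auto intro: mult_ell2)
  show ?thesis
  proof (cases "\<exists>w. v = tcat \<kappa> w")
    case True
    then obtain w where v: "v = tcat \<kappa> w" by auto
    have sp: "(\<forall>i. m i \<le> length (v i)) \<and> takem m v = \<kappa> \<and> dropm m v = w"
      using tcat_split[OF \<kappa>] v by blast
    show ?thesis unfolding v shift_on_range[OF f'] using sp f
      by (auto simp: v wg_def mop_def)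
  next
    case False
    have "\<not> (wg L m v \<and> takem m v = \<kappa>)"
      using False tcat_split[OF \<kappa>, of v "dropm m v"] by (auto simp: wg_def)
    moreover have "shift L \<kappa> (mop L c' f) v = 0" by (rule shift_off_range) (use False in auto)
    ultimately show ?thesis by auto
  qed
qed

lemma wop_term:
  assumes \<kappa>: "tlen \<kappa> = m" and f: "f \<in> ell2 L" and c: "bnd L c"
  shows "shift L \<kappa> (mop L (clam L c \<kappa>) f) v =
     (if wg L m v \<and> takem m v = \<kappa> then c v * f (dropm m v) else 0)"
proof -
  have "wg L m v \<and> takem m v = \<kappa> \<Longrightarrow> v = tcat \<kappa> (dropm m v)"
    using tcat_split[OF \<kappa>, of v "dropm m v"] by (auto simp: wg_def)
  thus ?thesis unfolding shift_mop_at[OF \<kappa> f bnd_clam[OF c]]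
    by (auto simp: clam_def wg_def)
qed

lemma wop_decomp:
  assumes fl: "factorial_language d N L" and c: "bnd L c"
  shows "wop L m c = (\<Sum>\<kappa>\<in>Pm d N m. shift L \<kappa> \<circ> mop L (clam L c \<kappa>))"
proof
  fix f
  show "wop L m c f = (\<Sum>\<kappa>\<in>Pm d N m. shift L \<kappa> \<circ> mop L (clam L c \<kappa>)) f"
  proof (cases "f \<in> ell2 L")
    case False
    have "shift L \<kappa> (mop L (clam L c \<kappa>) f) = 0" for \<kappa>
      using False bo_0[OF shift_bo] by (simp add: mop_def)
    thus ?thesis using False by (simp add: wop_def sum_fun_apply)
  next
    case f: True
    show ?thesis
    proof
      fix v
      have "(\<Sum>\<kappa>\<in>Pm d N m. shift L \<kappa> \<circ> mop L (clam L c \<kappa>)) f v =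
          (\<Sum>\<kappa>\<in>Pm d N m. if wg L m v \<and> takem m v = \<kappa> then c v * f (dropm m v) else 0)"
        unfolding sum_fun_apply by (intro sum.cong refl) (simp add: wop_term[OF Pm_tlen f c])
      also have "\<dots> = (if wg L m v then c v * f (dropm m v) else 0)"
      proof (cases "wg L m v")
        case True
        hence "takem m v \<in> Pm d N m" using fl_words[OF fl] by (intro takem_Pm) (auto simp: wg_def)
        have "(\<Sum>\<kappa>\<in>Pm d N m. if wg L m v \<and> takem m v = \<kappa> then c v * f (dropm m v) else 0)
            = (\<Sum>\<kappa>\<in>Pm d N m. if takem m v = \<kappa> then c v * f (dropm m v) else 0)"
          using True by simp
        also have "\<dots> = c v * f (dropm m v)" by (subst sum.delta'[OF finite_Pm]) (use \<open>takem m v \<in> Pm d N m\<close> in simp)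
        finally show ?thesis using True by simp
      qed simp
      finally show "wop L m c f v = (\<Sum>\<kappa>\<in>Pm d N m. shift L \<kappa> \<circ> mop L (clam L c \<kappa>)) f v"
        using f by (simp add: wop_def)
    qed
  qed
qed

lemma wop_bo:
  assumes fl: "factorial_language d N L" and c: "bnd L c"
  shows "wop L m c \<in> bounded_ops L"
proof -
  have "\<And>\<kappa>. \<kappa> \<in> Pm d N m \<Longrightarrow> shift L \<kappa> \<circ> mop L (clam L c \<kappa>) \<in> bounded_ops L"
    by (rule bo_comp[OF shift_bo mult_bo'[OF bnd_clam[OF c]]])
  thus ?thesis unfolding wop_decomp[OF fl c] by (rule bo_sum[OF finite_Pm])
qed

lemma adjp_wop:
  assumes fl: "factorial_language d N L" and c: "bnd L c"
  shows "adjp L (wop L m c) (\<Sum>\<kappa>\<in>Pm d N m. mop L (\<lambda>w. cnj (clam L c \<kappa> w)) \<circ> Rs L \<kappa>)"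
proof -
  have "\<And>\<kappa>. \<kappa> \<in> Pm d N m \<Longrightarrow> shift L \<kappa> \<circ> mop L (clam L c \<kappa>) \<in> bounded_ops L"
    by (rule bo_comp[OF shift_bo mult_bo'[OF bnd_clam[OF c]]])
  moreover have "\<And>\<kappa>. \<kappa> \<in> Pm d N m \<Longrightarrow> adjp L (shift L \<kappa> \<circ> mop L (clam L c \<kappa>))
      (mop L (\<lambda>w. cnj (clam L c \<kappa> w)) \<circ> Rs L \<kappa>)"
    by (rule adjp_comp[OF adjp_shift adjp_mult[OF bnd_clam[OF c]] mult_bo'[OF bnd_clam[OF c]]])
  ultimately show ?thesis unfolding wop_decomp[OF fl c] by (intro adjp_sum[OF finite_Pm])
qed

lemma adjoint_wop:
  assumes fl: "factorial_language d N L" and c: "bnd L c"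
  shows "adjoint L (wop L m c) \<in> bounded_ops L"
    "g \<in> ell2 L \<Longrightarrow> adjoint L (wop L m c) g w =
      (\<Sum>\<kappa>\<in>Pm d N m. if w \<in> L \<and> tcat \<kappa> w \<in> L then cnj (c (tcat \<kappa> w)) * g (tcat \<kappa> w) else 0)"
proof -
  have e: "adjoint L (wop L m c) = (\<Sum>\<kappa>\<in>Pm d N m. mop L (\<lambda>w. cnj (clam L c \<kappa> w)) \<circ> Rs L \<kappa>)"
    by (rule adjoint_eq[OF adjp_wop[OF fl c]])
  show "adjoint L (wop L m c) \<in> bounded_ops L" using adjp_bo[OF adjp_wop[OF fl c]] e by simp
  assume g: "g \<in> ell2 L"
  show "adjoint L (wop L m c) g w =
      (\<Sum>\<kappa>\<in>Pm d N m. if w \<in> L \<and> tcat \<kappa> w \<in> L then cnj (c (tcat \<kappa> w)) * g (tcat \<kappa> w) else 0)"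
    unfolding e sum_fun_apply
    by (intro sum.cong refl) (simp add: mop_def Rs_ell2[OF g] clam_def, simp add: Rs_def g)
qed

definition Wset :: "word set \<Rightarrow> (nat \<Rightarrow> nat) \<Rightarrow> op set" where
  "Wset L m = {\<xi> \<in> bounded_ops L. \<xi> = wop L m (wtx L m \<xi>)}"

lemma wop_cong:
  assumes "\<And>v. wg L m v \<Longrightarrow> c v = c' v"
  shows "wop L m c = wop L m c'"
  using assms by (auto simp: wop_def fun_eq_iff)

lemma wtx_wop: "wg L m v \<Longrightarrow> wtx L m (wop L m c) v = c v"
  by (simp add: wtx_def wop_def ev_ell2 wg_def) (simp add: ev_def)

lemma wop_W:
  assumes fl: "factorial_language d N L" and c: "bnd L c"
  shows "wop L m c \<in> Wset L m"
  unfolding Wset_def using wop_bo[OF fl c] by (auto intro: wop_cong simp: wtx_wop)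

lemma wtx_bound:
  assumes a: "a \<in> bounded_ops L"
  shows "cmod (wtx L m a v) \<le> opnorm L a"
proof (cases "dropm m v \<in> L")
  case True thus ?thesis unfolding wtx_def by (rule opn_point_ev[OF a])
next
  case False thus ?thesis using opn_nonneg[OF a] bo_out[OF a ev_notin[OF False]] by (simp add: wtx_def)
qed

lemma bnd_wtx: "a \<in> bounded_ops L \<Longrightarrow> bnd L (wtx L m a)"
  unfolding bnd_def using wtx_bound by blast

lemma wtx_plus: "wtx L m (a + b) v = wtx L m a v + wtx L m b v" by (simp add: wtx_def)
lemma wtx_minus: "wtx L m (a - b) v = wtx L m a v - wtx L m b v" by (simp add: wtx_def)
lemma wtx_opscale: "wtx L m (opscale k a) v = k * wtx L m a v" by (simp add: wtx_def opscale_def)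

lemma W_bo: "a \<in> Wset L m \<Longrightarrow> a \<in> bounded_ops L" by (simp add: Wset_def)
lemma W_eq: "a \<in> Wset L m \<Longrightarrow> a = wop L m (wtx L m a)" by (simp add: Wset_def)

lemma wop_plus: "wop L m c + wop L m c' = wop L m (\<lambda>v. c v + c' v)"
  by (auto simp: wop_def fun_eq_iff algebra_simps)

lemma wop_opscale: "opscale k (wop L m c) = wop L m (\<lambda>v. k * c v)"
  by (auto simp: wop_def opscale_def fun_eq_iff algebra_simps)

lemma W_plus: "a \<in> Wset L m \<Longrightarrow> b \<in> Wset L m \<Longrightarrow> a + b \<in> Wset L m"
proof -
  assume a: "a \<in> Wset L m" and b: "b \<in> Wset L m"
  have "a + b = wop L m (wtx L m a) + wop L m (wtx L m b)" using W_eq[OF a] W_eq[OF b] by simp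
  also have "\<dots> = wop L m (wtx L m (a + b))" unfolding wop_plus by (rule wop_cong) (simp add: wtx_plus)
  finally show ?thesis unfolding Wset_def using bo_plus[OF W_bo[OF a] W_bo[OF b]] by simp
qed

lemma W_opscale: "a \<in> Wset L m \<Longrightarrow> opscale k a \<in> Wset L m"
proof -
  assume a: "a \<in> Wset L m"
  have "opscale k a = opscale k (wop L m (wtx L m a))" using W_eq[OF a] by simp
  also have "\<dots> = wop L m (wtx L m (opscale k a))" unfolding wop_opscale by (rule wop_cong) (simp add: wtx_opscale)
  finally show ?thesis unfolding Wset_def using bo_opscale[OF W_bo[OF a]] by simp
qed

lemma W_zero: "(0::op) \<in> Wset L m"
proof -
  have "wop L m (\<lambda>v. 0) = 0" by (auto simp: wop_def fun_eq_iff)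
  moreover have "wop L m (wtx L m (0::op)) = wop L m (\<lambda>v. 0)" by (rule wop_cong) (simp add: wtx_def)
  ultimately show ?thesis unfolding Wset_def using bo_zero by simp
qed

lemma W_limit:
  assumes s: "\<And>n. s n \<in> Wset L m" and T: "T \<in> bounded_ops L"
    and lim: "(\<lambda>n. opnorm L (s n - T)) \<longlonglongrightarrow> 0"
  shows "T \<in> Wset L m"
proof -
  have sb: "\<And>n. s n \<in> bounded_ops L" using s W_bo by blast
  have "T = wop L m (wtx L m T)"
  proof
    fix f show "T f = wop L m (wtx L m T) f"
    proof (cases "f \<in> ell2 L")
      case False thus ?thesis by (simp add: bo_out[OF T] wop_def)
    next
      case f: True
      show ?thesis
      proof
        fix v
        have l1: "(\<lambda>n. s n f v) \<longlonglongrightarrow> T f v" by (rule pointwise_conv[OF sb T lim f])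
        have eq: "s n f v = (if wg L m v then wtx L m (s n) v * f (dropm m v) else 0)" for n
        proof -
          have "s n f v = wop L m (wtx L m (s n)) f v" using W_eq[OF s] by metis
          thus ?thesis using f by (simp add: wop_def)
        qed
        show "T f v = wop L m (wtx L m T) f v"
        proof (cases "wg L m v")
          case False
          have "(\<lambda>n. s n f v) \<longlonglongrightarrow> 0" unfolding eq using False by simp
          thus ?thesis using LIMSEQ_unique[OF l1] False f by (simp add: wop_def)
        next
          case True
          have dl: "dropm m v \<in> L" using True by (simp add: wg_def)
          have l2: "(\<lambda>n. wtx L m (s n) v) \<longlonglongrightarrow> wtx L m T v"
            unfolding wtx_def by (rule pointwise_conv[OF sb T lim ev_ell2[OF dl]])
          have l3: "(\<lambda>n. s n f v) \<longlonglongrightarrow> wtx L m T v * f (dropm m v)"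
            unfolding eq using True by (simp, intro tendsto_mult l2 tendsto_const)
          thus ?thesis using LIMSEQ_unique[OF l1 l3] True f by (simp add: wop_def)
        qed
      qed
    qed
  qed
  thus ?thesis using T by (simp add: Wset_def)
qed

lemma W_bnd: "a \<in> Wset L m \<Longrightarrow> bnd L (wtx L m a)" by (simp add: bnd_wtx W_bo)

lemma shift_mop_W:
  assumes fl: "factorial_language d N L" and \<mu>: "tlen \<mu> = m" and b: "b \<in> Dset L"
  shows "shift L \<mu> \<circ> b = wop L m (\<lambda>v. if takem m v = \<mu> then dg b (dropm m v) else 0)"
    "shift L \<mu> \<circ> b \<in> Wset L m"
proof -
  have bb: "bnd L (dg b)" by (rule D_bnd[OF b])
  have "shift L \<mu> \<circ> mop L (dg b) = wop L m (\<lambda>v. if takem m v = \<mu> then dg b (dropm m v) else 0)"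
  proof
    fix f show "(shift L \<mu> \<circ> mop L (dg b)) f = wop L m (\<lambda>v. if takem m v = \<mu> then dg b (dropm m v) else 0) f"
    proof (cases "f \<in> ell2 L")
      case False thus ?thesis by (simp add: mop_def wop_def bo_0[OF shift_bo])
    next
      case f: True
      show ?thesis using f
        by (auto simp: fun_eq_iff shift_mop_at[OF \<mu> f bb] wop_def)
    qed
  qed
  thus e: "shift L \<mu> \<circ> b = wop L m (\<lambda>v. if takem m v = \<mu> then dg b (dropm m v) else 0)"
    using D_eq[OF b] by simp
  have "bnd L (\<lambda>v. if takem m v = \<mu> then dg b (dropm m v) else 0)"
    using dg_bound[OF D_bo[OF b]] by (auto simp: bnd_def intro!: exI[of _ "opnorm L b"] opn_nonneg D_bo b)
  thus "shift L \<mu> \<circ> b \<in> Wset L m" unfolding e by (rule wop_W[OF fl])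
qed



definition cs_ok :: "word set \<Rightarrow> op set \<Rightarrow> op set \<Rightarrow> bool" where
  "cs_ok L G S \<longleftrightarrow> S \<subseteq> bounded_ops L \<and> G \<subseteq> S \<and> idop L \<in> S \<and>
     (\<forall>a\<in>S. \<forall>b\<in>S. a + b \<in> S \<and> a \<circ> b \<in> S) \<and>
     (\<forall>c. \<forall>a\<in>S. opscale c a \<in> S) \<and> (\<forall>a\<in>S. adjoint L a \<in> S) \<and> norm_closed L S"

lemma ucg_induct: "cs_ok L G S \<Longrightarrow> unital_cstar_gen L G \<subseteq> S"
  unfolding unital_cstar_gen_def cs_ok_def by blast

lemma ucg_gen: "G \<subseteq> unital_cstar_gen L G" unfolding unital_cstar_gen_def by blast
lemma ucg_idop: "idop L \<in> unital_cstar_gen L G" unfolding unital_cstar_gen_def by blast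
lemma ucg_plus: "a \<in> unital_cstar_gen L G \<Longrightarrow> b \<in> unital_cstar_gen L G \<Longrightarrow> a + b \<in> unital_cstar_gen L G"
  unfolding unital_cstar_gen_def by blast
lemma ucg_comp: "a \<in> unital_cstar_gen L G \<Longrightarrow> b \<in> unital_cstar_gen L G \<Longrightarrow> a \<circ> b \<in> unital_cstar_gen L G"
  unfolding unital_cstar_gen_def by blast
lemma ucg_opscale: "a \<in> unital_cstar_gen L G \<Longrightarrow> opscale c a \<in> unital_cstar_gen L G"
  unfolding unital_cstar_gen_def by blast
lemma ucg_adj: "a \<in> unital_cstar_gen L G \<Longrightarrow> adjoint L a \<in> unital_cstar_gen L G"
  unfolding unital_cstar_gen_def by blast
lemma ucg_closed:
  assumes "\<And>n. s n \<in> unital_cstar_gen L G" "T \<in> bounded_ops L"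
    "(\<lambda>n. opnorm L (s n - T)) \<longlonglongrightarrow> 0"
  shows "T \<in> unital_cstar_gen L G"
  using assms unfolding unital_cstar_gen_def norm_closed_def by blast

lemma opscale0: "opscale 0 a = 0" by (simp add: opscale_def fun_eq_iff)

lemma ucg_zero: "(0::op) \<in> unital_cstar_gen L G"
  using ucg_opscale[OF ucg_idop, of 0 L G] by (simp add: opscale0)

lemma ucg_minus: "a \<in> unital_cstar_gen L G \<Longrightarrow> b \<in> unital_cstar_gen L G \<Longrightarrow> a - b \<in> unital_cstar_gen L G"
proof -
  assume a: "a \<in> unital_cstar_gen L G" and b: "b \<in> unital_cstar_gen L G"
  have "a + opscale (-1) b \<in> unital_cstar_gen L G" by (intro ucg_plus ucg_opscale a b)
  moreover have "a + opscale (-1) b = a - b" by (simp add: opscale_m1)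
  ultimately show ?thesis by simp
qed

definition cspan_ok :: "word set \<Rightarrow> op set \<Rightarrow> op set \<Rightarrow> bool" where
  "cspan_ok L G V \<longleftrightarrow> V \<subseteq> bounded_ops L \<and> G \<subseteq> V \<and> 0 \<in> V \<and>
     (\<forall>a\<in>V. \<forall>b\<in>V. a + b \<in> V) \<and> (\<forall>c. \<forall>a\<in>V. opscale c a \<in> V) \<and> norm_closed L V"

lemma cspan_induct: "cspan_ok L G V \<Longrightarrow> closed_span L G \<subseteq> V"
  unfolding closed_span_def cspan_ok_def by blast

lemma cspan_gen: "G \<subseteq> closed_span L G" unfolding closed_span_def by blast

section \<open>Generators of the checkers algebra\<close>

definition ind :: "word set \<Rightarrow> word \<Rightarrow> word \<Rightarrow> complex" where
  "ind L \<mu> = (\<lambda>w. if tcat \<mu> w \<in> L then 1 else 0)"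

lemma bnd_ind: "bnd L (ind L \<mu>)" by (auto simp: bnd_def ind_def intro!: exI[of _ 1])

lemma gen_mop: "adjoint L (shift L \<mu>) \<circ> shift L \<mu> = mop L (ind L \<mu>)"
proof
  fix f
  show "(adjoint L (shift L \<mu>) \<circ> shift L \<mu>) f = mop L (ind L \<mu>) f"
  proof (cases "f \<in> ell2 L")
    case False thus ?thesis
      by (simp add: adjoint_eq[OF adjp_shift] mop_def bo_out[OF shift_bo] bo_0[OF Rs_bo])
  next
    case f: True
    show ?thesis
    proof
      fix w
      show "(adjoint L (shift L \<mu>) \<circ> shift L \<mu>) f w = mop L (ind L \<mu>) f w"
        using f shift_ell2(1)[OF f, of \<mu>] ell2_vanish[OF f, of w]
        by (simp add: adjoint_eq[OF adjp_shift] mop_def Rs_def shift_on_range[OF f] ind_def)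
    qed
  qed
qed

abbreviation gens :: "word set \<Rightarrow> op set" where
  "gens L \<equiv> {adjoint L (shift L \<mu>) \<circ> shift L \<mu> | \<mu>. \<mu> \<in> L}"

lemma D_cs_ok: "cs_ok L (gens L) (Dset L)"
  unfolding cs_ok_def norm_closed_def
proof (intro conjI ballI allI impI)
  show "Dset L \<subseteq> bounded_ops L" using D_bo by blast
  show "gens L \<subseteq> Dset L" using gen_mop mult_D[OF bnd_ind] by auto
  show "idop L \<in> Dset L" by (rule D_idop)
  fix a b assume a: "a \<in> Dset L" and b: "b \<in> Dset L"
  show "a + b \<in> Dset L" by (rule D_plus[OF a b])
  show "a \<circ> b \<in> Dset L" by (rule D_comp[OF a b])
next
  fix c a assume a: "a \<in> Dset L"
  show "opscale c a \<in> Dset L" by (rule D_opscale[OF a])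
next
  fix a assume a: "a \<in> Dset L"
  show "adjoint L a \<in> Dset L" by (rule D_adjoint[OF a])
next
  fix s T assume h: "(\<forall>n. s n \<in> Dset L) \<and> T \<in> bounded_ops L \<and> (\<lambda>n. opnorm L (s n - T)) \<longlonglongrightarrow> 0"
  thus "T \<in> Dset L" using D_limit by blast
qed

lemma ch_D: "checkers L \<subseteq> Dset L"
  unfolding checkers_def by (rule ucg_induct[OF D_cs_ok])

lemma ch_bo: "a \<in> checkers L \<Longrightarrow> a \<in> bounded_ops L"
  using ch_D D_bo by blast

lemma ind_ch:
  assumes fl: "factorial_language d N L"
  shows "mop L (ind L \<nu>) \<in> checkers L"
proof (cases "\<nu> \<in> L")
  case True
  have "adjoint L (shift L \<nu>) \<circ> shift L \<nu> \<in> checkers L"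
    unfolding checkers_def using True by (intro subsetD[OF ucg_gen]) auto
  thus ?thesis by (simp add: gen_mop)
next
  case False
  have "mop L (ind L \<nu>) = mop L (\<lambda>w. 0)"
  proof (rule mult_cong)
    fix w assume "w \<in> L"
    have "tcat \<nu> w \<notin> L" using False fl_sub(1)[OF fl, of \<nu> w] by blast
    thus "ind L \<nu> w = 0" by (simp add: ind_def)
  qed
  thus ?thesis unfolding mult_zero checkers_def by (simp add: ucg_zero)
qed

section \<open>The projections\<close>

lemma delta_split: "(\<exists>w. v = tcat (delta i k) w) \<longleftrightarrow> (v i \<noteq> [] \<and> hd (v i) = k)"
proof
  assume "\<exists>w. v = tcat (delta i k) w"
  then obtain w where "v = tcat (delta i k) w" by auto
  thus "v i \<noteq> [] \<and> hd (v i) = k" by (simp add: tcat_def delta_def)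
next
  assume h: "v i \<noteq> [] \<and> hd (v i) = k"
  have "v = tcat (delta i k) (v(i := tl (v i)))"
    using h by (auto simp: tcat_def delta_def fun_eq_iff)
  thus "\<exists>w. v = tcat (delta i k) w" by blast
qed

lemma proj_term:
  assumes fl: "factorial_language d N L" and g: "g \<in> ell2 L"
  shows "(shift L (delta i k) \<circ> Rs L (delta i k)) g v = (if v \<in> L \<and> v i \<noteq> [] \<and> hd (v i) = k then g v else 0)"
proof (cases "\<exists>w. v = tcat (delta i k) w")
  case True
  then obtain w where v: "v = tcat (delta i k) w" by auto
  have wL: "v \<in> L \<Longrightarrow> w \<in> L" using fl_sub(2)[OF fl, of "delta i k" w] v by blast
  have c: "v i \<noteq> [] \<and> hd (v i) = k" using True delta_split by blast
  have "(shift L (delta i k) \<circ> Rs L (delta i k)) g v = shift L (delta i k) (Rs L (delta i k) g) (tcat (delta i k) w)"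
    by (simp add: v)
  also have "\<dots> = (if tcat (delta i k) w \<in> L \<and> w \<in> L then Rs L (delta i k) g w else 0)"
    by (rule shift_on_range[OF Rs_ell2(1)[OF g]])
  also have "\<dots> = (if v \<in> L then g v else 0)"
    using wL by (auto simp: Rs_def g v)
  finally show ?thesis using c by simp
next
  case False
  thus ?thesis unfolding delta_split[symmetric] using False by (simp add: shift_off_range)
qed

lemma Pproj_mop:
  assumes fl: "factorial_language d N L"
  shows "Pproj d L i = mop L (\<lambda>v. if v i \<noteq> [] then 1 else 0)"
proof
  fix g
  show "Pproj d L i g = mop L (\<lambda>v. if v i \<noteq> [] then 1 else 0) g"
  proof (cases "g \<in> ell2 L")
    case False
    thus ?thesis
      by (simp add: Pproj_def adjoint_eq[OF adjp_shift] sum_fun_apply mop_def bo_out[OF Rs_bo] bo_0[OF shift_bo])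
  next
    case g: True
    show ?thesis
    proof
      fix v
      have "Pproj d L i g v = (\<Sum>k\<in>{1..d}. if v \<in> L \<and> v i \<noteq> [] \<and> hd (v i) = k then g v else 0)"
        unfolding Pproj_def adjoint_eq[OF adjp_shift] sum_fun_apply
        by (intro sum.cong refl) (rule proj_term[OF fl g])
      also have "\<dots> = (if v i \<noteq> [] then 1 else 0) * g v"
      proof (cases "v \<in> L \<and> v i \<noteq> []")
        case True
        hence "v \<in> words d N" "hd (v i) \<in> set (v i)" using fl_words[OF fl] by auto
        hence "hd (v i) \<in> {1..d}" unfolding words_def by blast
        thus ?thesis using True by (simp add: sum.delta'[where b="\<lambda>_. g v"] eq_commute[of "hd (v i)"])
      next
        case False thus ?thesis using ell2_vanish[OF g] by auto
      qed
      finally show "Pproj d L i g v = mop L (\<lambda>v. if v i \<noteq> [] then 1 else 0) g v"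
        using g by (simp add: mop_def)
    qed
  qed
qed

lemma foldr_Q:
  assumes fl: "factorial_language d N L"
  shows "foldr (\<lambda>i acc. (idop L - Pproj d L i) \<circ> acc) xs (idop L) =
    mop L (\<lambda>v. if \<forall>i\<in>set xs. v i = [] then 1 else 0)"
proof (induction xs)
  case Nil show ?case by (simp add: idop_mult)
next
  case (Cons i xs)
  have b: "bnd L (\<lambda>v. if \<forall>i\<in>set xs. v i = [] then 1 else 0)" by (auto simp: bnd_def intro!: exI[of _ 1])
  have "(idop L - Pproj d L i) \<circ> mop L (\<lambda>v. if \<forall>i\<in>set xs. v i = [] then 1 else 0) =
      mop L (\<lambda>v. (1 - (if v i \<noteq> [] then 1 else 0)) * (if \<forall>i\<in>set xs. v i = [] then 1 else 0))"
    unfolding idop_mult Pproj_mop[OF fl] mult_minus by (rule mult_comp[OF b])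
  also have "\<dots> = mop L (\<lambda>v. if \<forall>j\<in>set (i # xs). v j = [] then 1 else 0)"
    by (rule mult_cong) auto
  finally have e: "(idop L - Pproj d L i) \<circ> mop L (\<lambda>v. if \<forall>i\<in>set xs. v i = [] then 1 else 0) =
      mop L (\<lambda>v. if \<forall>j\<in>set (i # xs). v j = [] then 1 else 0)" .
  have "foldr (\<lambda>i acc. (idop L - Pproj d L i) \<circ> acc) (i # xs) (idop L) =
      (idop L - Pproj d L i) \<circ> foldr (\<lambda>i acc. (idop L - Pproj d L i) \<circ> acc) xs (idop L)"
    by (simp only: foldr_Cons comp_apply)
  thus ?case unfolding Cons.IH e .
qed

definition Zind :: "nat set \<Rightarrow> word \<Rightarrow> complex" where
  "Zind F = (\<lambda>v. if \<forall>i\<in>F. v i = [] then 1 else 0)"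

lemma QF_mop:
  assumes fl: "factorial_language d N L" and F: "finite F"
  shows "QF d L F = mop L (Zind F)"
  unfolding QF_def foldr_Q[OF fl] using F by (simp add: Zind_def)

lemma bnd_Zind: "bnd L (Zind F)" by (auto simp: bnd_def Zind_def intro!: exI[of _ 1])



lemma mop_limit:
  assumes le: "\<And>n w. w \<in> L \<Longrightarrow> cmod (c n w - c' w) \<le> e n" and e0: "\<And>n. e n \<ge> 0"
    and e: "e \<longlonglongrightarrow> 0"
  shows "(\<lambda>n. opnorm L (mop L (c n) - mop L c')) \<longlonglongrightarrow> 0"
proof (rule Lim_null_comparison[OF always_eventually[OF allI] e])
  fix n
  have b: "\<forall>w\<in>L. cmod (c n w - c' w) \<le> e n" using le by blast
  have "opnorm L (mop L (\<lambda>w. c n w - c' w)) \<le> e n" by (rule mult_opnorm[OF b e0])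
  moreover have "opnorm L (mop L (\<lambda>w. c n w - c' w)) \<ge> 0" by (rule opn_nonneg[OF mult_bo[OF b]])
  ultimately show "norm (opnorm L (mop L (c n) - mop L c')) \<le> e n" unfolding mult_minus by simp
qed

lemma dg_comp_D: "a \<in> Dset L \<Longrightarrow> b \<in> Dset L \<Longrightarrow> v \<in> L \<Longrightarrow> dg (a \<circ> b) v = dg a v * dg b v"
proof -
  assume a: "a \<in> Dset L" and b: "b \<in> Dset L" and v: "v \<in> L"
  have "a \<circ> b = mop L (dg a) \<circ> mop L (dg b)" using D_eq[OF a] D_eq[OF b] by simp
  also have "\<dots> = mop L (\<lambda>v. dg a v * dg b v)" by (rule mult_comp[OF D_bnd[OF b]])
  finally show ?thesis using v by (simp add: dg_mult)
qed

lemma dg_adj_D: "a \<in> Dset L \<Longrightarrow> v \<in> L \<Longrightarrow> dg (adjoint L a) v = cnj (dg a v)"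
  by (simp add: adjoint_D dg_mult)

lemma dg_idop: "v \<in> L \<Longrightarrow> dg (idop L) v = 1"
  by (simp add: idop_mult dg_mult)

definition cj :: "word set \<Rightarrow> word \<Rightarrow> op \<Rightarrow> op" where
  "cj L \<mu> a = mop L (\<lambda>w. if tcat \<mu> w \<in> L then dg a (tcat \<mu> w) else 0)"

lemma bnd_cj_w: "a \<in> bounded_ops L \<Longrightarrow> bnd L (\<lambda>w. if tcat \<mu> w \<in> L then dg a (tcat \<mu> w) else 0)"
  using dg_bound[of a L] opn_nonneg[of a L] by (auto simp: bnd_def intro!: exI[of _ "opnorm L a"])

lemma cj_D: "a \<in> bounded_ops L \<Longrightarrow> cj L \<mu> a \<in> Dset L"
  unfolding cj_def by (rule mult_D[OF bnd_cj_w])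

lemma cj_closed:
  assumes fl: "factorial_language d N L" and a: "a \<in> checkers L"
  shows "cj L \<mu> a \<in> checkers L"
proof -
  define S where "S = {a \<in> Dset L. cj L \<mu> a \<in> checkers L}"
  have ch_ucg: "checkers L = unital_cstar_gen L (gens L)" by (simp add: checkers_def)
  have "cs_ok L (gens L) S"
    unfolding cs_ok_def norm_closed_def
  proof (intro conjI ballI allI impI)
    show "S \<subseteq> bounded_ops L" using D_bo by (auto simp: S_def)
    show "gens L \<subseteq> S"
    proof
      fix x assume "x \<in> gens L"
      then obtain lm where l: "lm \<in> L" "x = adjoint L (shift L lm) \<circ> shift L lm" by auto
      have x: "x = mop L (ind L lm)" using l gen_mop by simp
      have "cj L \<mu> x = mop L (ind L (tcat lm \<mu>))"
        unfolding cj_def x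
      proof (rule mult_cong)
        fix w assume "w \<in> L"
        have "tcat (tcat lm \<mu>) w \<in> L \<Longrightarrow> tcat \<mu> w \<in> L"
          using fl_sub(2)[OF fl, of lm "tcat \<mu> w"] by (simp add: tcat_assoc)
        thus "(if tcat \<mu> w \<in> L then dg (mop L (ind L lm)) (tcat \<mu> w) else 0) = ind L (tcat lm \<mu>) w"
          by (auto simp: dg_mult ind_def tcat_assoc)
      qed
      thus "x \<in> S" unfolding S_def using ind_ch[OF fl] x mult_D[OF bnd_ind] by simp
    qed
    have "cj L \<mu> (idop L) = mop L (ind L \<mu>)"
      unfolding cj_def by (rule mult_cong) (simp add: dg_idop ind_def)
    thus "idop L \<in> S" unfolding S_def using ind_ch[OF fl] D_idop by simp
  next
    fix a b assume a: "a \<in> S" and b: "b \<in> S"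
    have aD: "a \<in> Dset L" and bD: "b \<in> Dset L" using a b by (auto simp: S_def)
    have ac: "cj L \<mu> a \<in> checkers L" and bc: "cj L \<mu> b \<in> checkers L" using a b by (auto simp: S_def)
    have "cj L \<mu> (a + b) = cj L \<mu> a + cj L \<mu> b"
      unfolding cj_def mult_plus by (rule mult_cong) (simp add: dg_plus)
    thus "a + b \<in> S" unfolding S_def using D_plus[OF aD bD] ucg_plus[OF ac[unfolded ch_ucg] bc[unfolded ch_ucg]] ch_ucg by simp
    have "cj L \<mu> (a \<circ> b) = cj L \<mu> a \<circ> cj L \<mu> b"
      unfolding cj_def mult_comp[OF bnd_cj_w[OF D_bo[OF bD]]]
      by (rule mult_cong) (simp add: dg_comp_D[OF aD bD])
    thus "a \<circ> b \<in> S" unfolding S_def using D_comp[OF aD bD] ucg_comp[OF ac[unfolded ch_ucg] bc[unfolded ch_ucg]] ch_ucg by simp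
  next
    fix c a assume a: "a \<in> S"
    have aD: "a \<in> Dset L" and ac: "cj L \<mu> a \<in> checkers L" using a by (auto simp: S_def)
    have "cj L \<mu> (opscale c a) = opscale c (cj L \<mu> a)"
      unfolding cj_def mult_opscale by (rule mult_cong) (simp add: dg_opscale)
    thus "opscale c a \<in> S" unfolding S_def using D_opscale[OF aD] ucg_opscale[OF ac[unfolded ch_ucg]] ch_ucg by simp
  next
    fix a assume a: "a \<in> S"
    have aD: "a \<in> Dset L" and ac: "cj L \<mu> a \<in> checkers L" using a by (auto simp: S_def)
    have "adjoint L (cj L \<mu> a) = mop L (\<lambda>v. cnj (dg (cj L \<mu> a) v))" by (rule adjoint_D[OF cj_D[OF D_bo[OF aD]]])
    also have "\<dots> = cj L \<mu> (adjoint L a)"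
      unfolding cj_def by (rule mult_cong) (simp add: dg_mult dg_adj_D[OF aD])
    finally have "cj L \<mu> (adjoint L a) = adjoint L (cj L \<mu> a)" by simp
    thus "adjoint L a \<in> S" unfolding S_def using D_adjoint[OF aD] ucg_adj[OF ac[unfolded ch_ucg]] ch_ucg by simp
  next
    fix s T assume h: "(\<forall>n. s n \<in> S) \<and> T \<in> bounded_ops L \<and> (\<lambda>n. opnorm L (s n - T)) \<longlonglongrightarrow> 0"
    have sD: "\<And>n. s n \<in> Dset L" and sc: "\<And>n. cj L \<mu> (s n) \<in> checkers L" using h by (auto simp: S_def)
    have T: "T \<in> bounded_ops L" and lim: "(\<lambda>n. opnorm L (s n - T)) \<longlonglongrightarrow> 0" using h by auto
    have TD: "T \<in> Dset L" by (rule D_limit[OF sD T lim])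
    have lim2: "(\<lambda>n. opnorm L (cj L \<mu> (s n) - cj L \<mu> T)) \<longlonglongrightarrow> 0"
      unfolding cj_def
    proof (rule mop_limit[OF _ _ lim])
      fix n w
      have "cmod (dg (s n - T) (tcat \<mu> w)) \<le> opnorm L (s n - T)"
        by (rule dg_bound[OF bo_minus[OF D_bo[OF sD] T]])
      thus "cmod ((if tcat \<mu> w \<in> L then dg (s n) (tcat \<mu> w) else 0) -
               (if tcat \<mu> w \<in> L then dg T (tcat \<mu> w) else 0)) \<le> opnorm L (s n - T)"
        using opn_nonneg[OF bo_minus[OF D_bo[OF sD] T]] by (auto simp: dg_minus)
    next
      fix n show "0 \<le> opnorm L (s n - T)" by (rule opn_nonneg[OF bo_minus[OF D_bo[OF sD] T]])
    qed
    have "cj L \<mu> T \<in> checkers L"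
      unfolding ch_ucg by (rule ucg_closed[OF sc[unfolded ch_ucg] D_bo[OF cj_D[OF T]] lim2])
    thus "T \<in> S" using TD by (simp add: S_def)
  qed
  hence "checkers L \<subseteq> S" unfolding ch_ucg by (rule ucg_induct)
  thus ?thesis using a by (auto simp: S_def)
qed



abbreviation Gm :: "word set \<Rightarrow> (nat \<Rightarrow> nat) \<Rightarrow> op set" where
  "Gm L m \<equiv> {shift L \<mu> \<circ> a | \<mu> a. \<mu> \<in> L \<and> a \<in> checkers L \<and> tlen \<mu> = m}"

lemma X_W:
  assumes fl: "factorial_language d N L"
  shows "Xfib L m \<subseteq> Wset L m"
  unfolding Xfib_def
proof (rule cspan_induct)
  show "cspan_ok L (Gm L m) (Wset L m)"
    unfolding cspan_ok_def norm_closed_def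
  proof (intro conjI ballI allI impI)
    show "Wset L m \<subseteq> bounded_ops L" using W_bo by blast
    show "Gm L m \<subseteq> Wset L m" using shift_mop_W(2)[OF fl] ch_D by blast
    show "(0::op) \<in> Wset L m" by (rule W_zero)
  next
    fix a b assume "a \<in> Wset L m" "b \<in> Wset L m" thus "a + b \<in> Wset L m" by (rule W_plus)
  next
    fix c a assume "a \<in> Wset L m" thus "opscale c a \<in> Wset L m" by (rule W_opscale)
  next
    fix s T assume "(\<forall>n. s n \<in> Wset L m) \<and> T \<in> bounded_ops L \<and> (\<lambda>n. opnorm L (s n - T)) \<longlonglongrightarrow> 0"
    thus "T \<in> Wset L m" using W_limit by blast
  qed
qed

definition Phi :: "word set \<Rightarrow> nat \<Rightarrow> nat \<Rightarrow> (nat \<Rightarrow> nat) \<Rightarrow> op \<Rightarrow> op \<Rightarrow> op \<Rightarrow> word \<Rightarrow> complex" where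
  "Phi L d N m \<xi> a \<eta> w = (\<Sum>\<kappa>\<in>Pm d N m. if tcat \<kappa> w \<in> L then
      cnj (wtx L m \<xi> (tcat \<kappa> w)) * dg a (tcat \<kappa> w) * wtx L m \<eta> (tcat \<kappa> w) else 0)"

lemma adj_W:
  assumes fl: "factorial_language d N L" and xi: "\<xi> \<in> Wset L m"
  shows "adjoint L \<xi> \<in> bounded_ops L"
    "g \<in> ell2 L \<Longrightarrow> adjoint L \<xi> g w =
      (\<Sum>\<kappa>\<in>Pm d N m. if w \<in> L \<and> tcat \<kappa> w \<in> L then cnj (wtx L m \<xi> (tcat \<kappa> w)) * g (tcat \<kappa> w) else 0)"
proof -
  have e: "adjoint L \<xi> = adjoint L (wop L m (wtx L m \<xi>))" using W_eq[OF xi] by simp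
  show "adjoint L \<xi> \<in> bounded_ops L" unfolding e by (rule adjoint_wop(1)[OF fl W_bnd[OF xi]])
  show "g \<in> ell2 L \<Longrightarrow> adjoint L \<xi> g w =
      (\<Sum>\<kappa>\<in>Pm d N m. if w \<in> L \<and> tcat \<kappa> w \<in> L then cnj (wtx L m \<xi> (tcat \<kappa> w)) * g (tcat \<kappa> w) else 0)"
    unfolding e by (rule adjoint_wop(2)[OF fl W_bnd[OF xi]])
qed

lemma W_apply:
  assumes eta: "\<eta> \<in> Wset L m" and f: "f \<in> ell2 L" and k: "\<kappa> \<in> Pm d N m"
    and w: "w \<in> L" and kw: "tcat \<kappa> w \<in> L"
  shows "\<eta> f (tcat \<kappa> w) = wtx L m \<eta> (tcat \<kappa> w) * f w"
proof -
  have t: "tlen \<kappa> = m" using k by (simp add: Pm_def)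
  have wg: "wg L m (tcat \<kappa> w)" "dropm m (tcat \<kappa> w) = w"
    using w kw tlen_tcat_drop[of \<kappa> w] tcat_len[of \<kappa> _ w] t by (auto simp: wg_def)
  have "\<eta> f (tcat \<kappa> w) = wop L m (wtx L m \<eta>) f (tcat \<kappa> w)" using W_eq[OF eta] by metis
  thus ?thesis using wg f by (simp add: wop_def)
qed

lemma X_formula:
  assumes fl: "factorial_language d N L" and xi: "\<xi> \<in> Wset L m" and eta: "\<eta> \<in> Wset L m"
    and a: "a \<in> Dset L"
  shows "adjoint L \<xi> \<circ> a \<circ> \<eta> = mop L (Phi L d N m \<xi> a \<eta>)"
proof
  fix f
  have ab: "a \<in> bounded_ops L" by (rule D_bo[OF a])
  have eb: "\<eta> \<in> bounded_ops L" by (rule W_bo[OF eta])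
  show "(adjoint L \<xi> \<circ> a \<circ> \<eta>) f = mop L (Phi L d N m \<xi> a \<eta>) f"
  proof (cases "f \<in> ell2 L")
    case False thus ?thesis by (simp add: mop_def bo_out[OF eb] bo_0[OF ab] bo_0[OF adj_W(1)[OF fl xi]])
  next
    case f: True
    have g: "a (\<eta> f) \<in> ell2 L" by (rule bo_ell2[OF ab bo_ell2[OF eb f]])
    have ae: "a (\<eta> f) v = dg a v * \<eta> f v" for v
    proof -
      have "a (\<eta> f) v = mop L (dg a) (\<eta> f) v" using D_eq[OF a] by metis
      thus ?thesis using bo_ell2[OF eb f] by (simp add: mop_def)
    qed
    show ?thesis
    proof
      fix w
      have "(adjoint L \<xi> \<circ> a \<circ> \<eta>) f w =
          (\<Sum>\<kappa>\<in>Pm d N m. if w \<in> L \<and> tcat \<kappa> w \<in> L then cnj (wtx L m \<xi> (tcat \<kappa> w)) * a (\<eta> f) (tcat \<kappa> w) else 0)"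
        using adj_W(2)[OF fl xi g] by simp
      also have "\<dots> = (\<Sum>\<kappa>\<in>Pm d N m. (if tcat \<kappa> w \<in> L then
          cnj (wtx L m \<xi> (tcat \<kappa> w)) * dg a (tcat \<kappa> w) * wtx L m \<eta> (tcat \<kappa> w) else 0) * f w)"
      proof (rule sum.cong[OF refl])
        fix \<kappa> assume k: "\<kappa> \<in> Pm d N m"
        show "(if w \<in> L \<and> tcat \<kappa> w \<in> L then cnj (wtx L m \<xi> (tcat \<kappa> w)) * a (\<eta> f) (tcat \<kappa> w) else 0) =
          (if tcat \<kappa> w \<in> L then cnj (wtx L m \<xi> (tcat \<kappa> w)) * dg a (tcat \<kappa> w) * wtx L m \<eta> (tcat \<kappa> w) else 0) * f w"
          using W_apply[OF eta f k] ell2_vanish[OF f, of w] by (auto simp: ae)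
      qed
      also have "\<dots> = mop L (Phi L d N m \<xi> a \<eta>) f w"
        using f by (simp add: mop_def Phi_def sum_distrib_right)
      finally show "(adjoint L \<xi> \<circ> a \<circ> \<eta>) f w = mop L (Phi L d N m \<xi> a \<eta>) f w" .
    qed
  qed
qed

lemma Phi_bound:
  assumes xi: "\<xi> \<in> bounded_ops L" and a: "a \<in> bounded_ops L" and eta: "\<eta> \<in> bounded_ops L"
  shows "cmod (Phi L d N m \<xi> a \<eta> w) \<le> real (card (Pm d N m)) * (opnorm L \<xi> * opnorm L a * opnorm L \<eta>)"
proof -
  have t: "cmod (if tcat \<kappa> w \<in> L then cnj (wtx L m \<xi> (tcat \<kappa> w)) * dg a (tcat \<kappa> w) * wtx L m \<eta> (tcat \<kappa> w) else 0)
      \<le> opnorm L \<xi> * opnorm L a * opnorm L \<eta>" for \<kappa>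
  proof -
    have "cmod (cnj (wtx L m \<xi> (tcat \<kappa> w)) * dg a (tcat \<kappa> w) * wtx L m \<eta> (tcat \<kappa> w))
        \<le> opnorm L \<xi> * opnorm L a * opnorm L \<eta>"
      unfolding norm_mult complex_mod_cnj
      by (intro mult_mono wtx_bound dg_bound xi a eta opn_nonneg mult_nonneg_nonneg norm_ge_zero)
    moreover have "0 \<le> opnorm L \<xi> * opnorm L a * opnorm L \<eta>"
      by (intro mult_nonneg_nonneg opn_nonneg xi a eta)
    ultimately show ?thesis by auto
  qed
  have "cmod (Phi L d N m \<xi> a \<eta> w) \<le> (\<Sum>\<kappa>\<in>Pm d N m. opnorm L \<xi> * opnorm L a * opnorm L \<eta>)"
    unfolding Phi_def by (rule sum_norm_le) (rule t)
  thus ?thesis by simp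
qed

lemma Phi_minus2: "Phi L d N m \<xi> a \<eta> w - Phi L d N m \<xi> a \<eta>' w = Phi L d N m \<xi> a (\<eta> - \<eta>') w"
  unfolding Phi_def by (simp add: sum_subtractf[symmetric] wtx_minus algebra_simps if_distrib cong: if_cong)

lemma Phi_minus1: "Phi L d N m \<xi> a \<eta> w - Phi L d N m \<xi>' a \<eta> w = Phi L d N m (\<xi> - \<xi>') a \<eta> w"
  unfolding Phi_def by (simp add: sum_subtractf[symmetric] wtx_minus algebra_simps if_distrib cong: if_cong)

lemma Phi_plus2: "Phi L d N m \<xi> a (\<eta> + \<eta>') w = Phi L d N m \<xi> a \<eta> w + Phi L d N m \<xi> a \<eta>' w"
  unfolding Phi_def by (simp add: sum.distrib[symmetric] wtx_plus algebra_simps if_distrib cong: if_cong)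

lemma Phi_plus1: "Phi L d N m (\<xi> + \<xi>') a \<eta> w = Phi L d N m \<xi> a \<eta> w + Phi L d N m \<xi>' a \<eta> w"
  unfolding Phi_def by (simp add: sum.distrib[symmetric] wtx_plus algebra_simps if_distrib cong: if_cong)

lemma Phi_scale2: "Phi L d N m \<xi> a (opscale c \<eta>) w = c * Phi L d N m \<xi> a \<eta> w"
  unfolding Phi_def by (simp add: sum_distrib_left wtx_opscale algebra_simps if_distrib cong: if_cong)

lemma Phi_scale1: "Phi L d N m (opscale c \<xi>) a \<eta> w = cnj c * Phi L d N m \<xi> a \<eta> w"
  unfolding Phi_def by (simp add: sum_distrib_left wtx_opscale algebra_simps if_distrib cong: if_cong)



lemma ch_ucg: "checkers L = unital_cstar_gen L (gens L)" by (simp add: checkers_def)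

lemma ch_plus: "a \<in> checkers L \<Longrightarrow> b \<in> checkers L \<Longrightarrow> a + b \<in> checkers L"
  unfolding ch_ucg by (rule ucg_plus)
lemma ch_comp: "a \<in> checkers L \<Longrightarrow> b \<in> checkers L \<Longrightarrow> a \<circ> b \<in> checkers L"
  unfolding ch_ucg by (rule ucg_comp)
lemma ch_opscale: "a \<in> checkers L \<Longrightarrow> opscale c a \<in> checkers L"
  unfolding ch_ucg by (rule ucg_opscale)
lemma ch_adj: "a \<in> checkers L \<Longrightarrow> adjoint L a \<in> checkers L"
  unfolding ch_ucg by (rule ucg_adj)
lemma ch_zero: "(0::op) \<in> checkers L"
  unfolding ch_ucg by (rule ucg_zero)
lemma ch_idop: "idop L \<in> checkers L"
  unfolding ch_ucg by (rule ucg_idop)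
lemma ch_minus: "a \<in> checkers L \<Longrightarrow> b \<in> checkers L \<Longrightarrow> a - b \<in> checkers L"
  unfolding ch_ucg by (rule ucg_minus)
lemma ch_closed: "(\<And>n. s n \<in> checkers L) \<Longrightarrow> T \<in> bounded_ops L \<Longrightarrow>
    (\<lambda>n. opnorm L (s n - T)) \<longlonglongrightarrow> 0 \<Longrightarrow> T \<in> checkers L"
  unfolding ch_ucg by (rule ucg_closed)

lemma mop_zero_w: "(\<And>w. w \<in> L \<Longrightarrow> c w = 0) \<Longrightarrow> mop L c = 0"
  using mult_cong[of L c "\<lambda>w. 0"] mult_zero by simp

lemma Phi_lim:
  assumes s: "\<And>n. s n \<in> bounded_ops L" and T: "T \<in> bounded_ops L"
    and lim: "(\<lambda>n. opnorm L (s n - T)) \<longlonglongrightarrow> 0"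
    and le: "\<And>n w. cmod (P (s n) w - P T w) \<le> K * opnorm L (s n - T)" and K: "K \<ge> 0"
  shows "(\<lambda>n. opnorm L (mop L (P (s n)) - mop L (P T))) \<longlonglongrightarrow> 0"
proof (rule mop_limit)
  show "\<And>n w. w \<in> L \<Longrightarrow> cmod (P (s n) w - P T w) \<le> K * opnorm L (s n - T)" by (rule le)
  show "\<And>n. 0 \<le> K * opnorm L (s n - T)" using K opn_nonneg[OF bo_minus[OF s T]] by simp
  show "(\<lambda>n. K * opnorm L (s n - T)) \<longlonglongrightarrow> 0" using tendsto_mult_right_zero[OF lim] by simp
qed

lemma wtx_gen:
  assumes fl: "factorial_language d N L" and mu: "\<mu> \<in> L" "tlen \<mu> = m" and b: "b \<in> checkers L"
    and k: "\<kappa> \<in> Pm d N m" and w: "w \<in> L" and kw: "tcat \<kappa> w \<in> L"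
  shows "wtx L m (shift L \<mu> \<circ> b) (tcat \<kappa> w) = (if \<kappa> = \<mu> then dg b w else 0)"
proof -
  have t: "tlen \<kappa> = m" using k by (simp add: Pm_def)
  have wg: "wg L m (tcat \<kappa> w)" using w kw tlen_tcat_drop[of \<kappa> w] tcat_len[of \<kappa> _ w] t by (auto simp: wg_def)
  show ?thesis unfolding shift_mop_W(1)[OF fl mu(2) subsetD[OF ch_D b]] wtx_wop[OF wg]
    using tlen_tcat_drop[of \<kappa> w] t by (cases "\<kappa> = \<mu>") auto
qed

lemma wtx_zero: "wtx L m 0 v = 0"
  unfolding wtx_def by simp

lemma inner:
  assumes fl: "factorial_language d N L" and a: "a \<in> checkers L"
    and nu: "\<nu> \<in> L" "tlen \<nu> = m" and b': "b' \<in> checkers L"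
  shows "\<forall>\<xi>\<in>Xfib L m. mop L (Phi L d N m \<xi> a (shift L \<nu> \<circ> b')) \<in> checkers L"
proof -
  define \<eta> where "\<eta> = shift L \<nu> \<circ> b'"
  have eW: "\<eta> \<in> Wset L m" unfolding \<eta>_def by (rule shift_mop_W(2)[OF fl nu(2) subsetD[OF ch_D b']])
  have eb: "\<eta> \<in> bounded_ops L" by (rule W_bo[OF eW])
  have ab: "a \<in> bounded_ops L" by (rule ch_bo[OF a])
  define V where "V = {\<xi> \<in> Wset L m. mop L (Phi L d N m \<xi> a \<eta>) \<in> checkers L}"
  have "cspan_ok L (Gm L m) V"
    unfolding cspan_ok_def norm_closed_def
  proof (intro conjI ballI allI impI)
    show "V \<subseteq> bounded_ops L" using W_bo by (auto simp: V_def)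
    show "(0::op) \<in> V"
    proof -
      have "mop L (Phi L d N m 0 a \<eta>) = 0"
      proof (rule mop_zero_w)
        fix w
        have "Phi L d N m (opscale 0 0) a \<eta> w = cnj 0 * Phi L d N m 0 a \<eta> w" by (rule Phi_scale1)
        thus "Phi L d N m 0 a \<eta> w = 0" by (simp add: opscale0)
      qed
      thus ?thesis using W_zero ch_zero by (simp add: V_def)
    qed
    show "Gm L m \<subseteq> V"
    proof
      fix x assume "x \<in> Gm L m"
      then obtain \<mu> b where x: "x = shift L \<mu> \<circ> b" and mu: "\<mu> \<in> L" "tlen \<mu> = m" and b: "b \<in> checkers L" by auto
      have xW: "x \<in> Wset L m" unfolding x by (rule shift_mop_W(2)[OF fl mu(2) subsetD[OF ch_D b]])
      have muP: "\<mu> \<in> Pm d N m" using mu fl_words[OF fl] by (auto simp: Pm_def)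
      have ph: "Phi L d N m x a \<eta> w = (if \<mu> = \<nu> then (if tcat \<mu> w \<in> L then
            cnj (dg b w) * dg a (tcat \<mu> w) * dg b' w else 0) else 0)" if w: "w \<in> L" for w
      proof -
        have "Phi L d N m x a \<eta> w = (\<Sum>\<kappa>\<in>Pm d N m. if \<kappa> = \<mu> then (if \<mu> = \<nu> then (if tcat \<mu> w \<in> L then
            cnj (dg b w) * dg a (tcat \<mu> w) * dg b' w else 0) else 0) else 0)"
          unfolding Phi_def
        proof (rule sum.cong[OF refl])
          fix \<kappa> assume k: "\<kappa> \<in> Pm d N m"
          show "(if tcat \<kappa> w \<in> L then cnj (wtx L m x (tcat \<kappa> w)) * dg a (tcat \<kappa> w) * wtx L m \<eta> (tcat \<kappa> w) else 0) =
            (if \<kappa> = \<mu> then (if \<mu> = \<nu> then (if tcat \<mu> w \<in> L then cnj (dg b w) * dg a (tcat \<mu> w) * dg b' w else 0) else 0) else 0)"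
            using wtx_gen[OF fl mu b k w] wtx_gen[OF fl nu b' k w] unfolding x \<eta>_def by auto
        qed
        also have "\<dots> = (if \<mu> = \<nu> then (if tcat \<mu> w \<in> L then
            cnj (dg b w) * dg a (tcat \<mu> w) * dg b' w else 0) else 0)"
          by (subst sum.delta[OF finite_Pm]) (simp add: muP)
        finally show ?thesis .
      qed
      have "mop L (Phi L d N m x a \<eta>) \<in> checkers L"
      proof (cases "\<mu> = \<nu>")
        case False
        have "mop L (Phi L d N m x a \<eta>) = 0" by (rule mop_zero_w) (simp add: ph False)
        thus ?thesis using ch_zero by simp
      next
        case True
        have bD: "b \<in> Dset L" and b'D: "b' \<in> Dset L" using b b' ch_D by auto
        have "adjoint L b \<circ> cj L \<mu> a \<circ> b' =
            mop L (\<lambda>v. cnj (dg b v)) \<circ> mop L (\<lambda>w. if tcat \<mu> w \<in> L then dg a (tcat \<mu> w) else 0) \<circ> mop L (dg b')"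
          unfolding adjoint_D[OF bD] cj_def using D_eq[OF b'D] by simp
        also have "\<dots> = mop L (\<lambda>v. cnj (dg b v) * (if tcat \<mu> v \<in> L then dg a (tcat \<mu> v) else 0) * dg b' v)"
          unfolding mult_comp[OF bnd_cj_w[OF ab]] mult_comp[OF D_bnd[OF b'D]] by simp
        also have "\<dots> = mop L (Phi L d N m x a \<eta>)"
          by (rule mult_cong) (simp add: ph True)
        finally have e: "adjoint L b \<circ> cj L \<mu> a \<circ> b' = mop L (Phi L d N m x a \<eta>)" .
        have "adjoint L b \<circ> cj L \<mu> a \<circ> b' \<in> checkers L"
          by (intro ch_comp ch_adj b b' cj_closed[OF fl a])
        thus ?thesis using e by simp
      qed
      thus "x \<in> V" using xW by (simp add: V_def)
    qed
  next
    fix x y assume x: "x \<in> V" and y: "y \<in> V"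
    have "mop L (Phi L d N m (x + y) a \<eta>) = mop L (Phi L d N m x a \<eta>) + mop L (Phi L d N m y a \<eta>)"
      unfolding mult_plus by (rule mult_cong) (simp add: Phi_plus1)
    thus "x + y \<in> V" using x y by (auto simp: V_def intro: W_plus ch_plus)
  next
    fix c x assume x: "x \<in> V"
    have "mop L (Phi L d N m (opscale c x) a \<eta>) = opscale (cnj c) (mop L (Phi L d N m x a \<eta>))"
      unfolding mult_opscale by (rule mult_cong) (simp add: Phi_scale1)
    thus "opscale c x \<in> V" using x by (auto simp: V_def intro: W_opscale ch_opscale)
  next
    fix s T assume h: "(\<forall>n. s n \<in> V) \<and> T \<in> bounded_ops L \<and> (\<lambda>n. opnorm L (s n - T)) \<longlonglongrightarrow> 0"
    have sW: "\<And>n. s n \<in> Wset L m" and sc: "\<And>n. mop L (Phi L d N m (s n) a \<eta>) \<in> checkers L"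
      using h by (auto simp: V_def)
    have T: "T \<in> bounded_ops L" and lim: "(\<lambda>n. opnorm L (s n - T)) \<longlonglongrightarrow> 0" using h by auto
    have TW: "T \<in> Wset L m" by (rule W_limit[OF sW T lim])
    have sb: "\<And>n. s n \<in> bounded_ops L" using sW W_bo by blast
    define K where "K = real (card (Pm d N m)) * (opnorm L a * opnorm L \<eta>)"
    have K: "K \<ge> 0" unfolding K_def by (intro mult_nonneg_nonneg opn_nonneg ab eb) simp
    have lim2: "(\<lambda>n. opnorm L (mop L (Phi L d N m (s n) a \<eta>) - mop L (Phi L d N m T a \<eta>))) \<longlonglongrightarrow> 0"
    proof (rule Phi_lim[OF sb T lim _ K])
      fix n w
      have "cmod (Phi L d N m (s n - T) a \<eta> w) \<le> real (card (Pm d N m)) * (opnorm L (s n - T) * opnorm L a * opnorm L \<eta>)"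
        by (rule Phi_bound[OF bo_minus[OF sb T] ab eb])
      thus "cmod (Phi L d N m (s n) a \<eta> w - Phi L d N m T a \<eta> w) \<le> K * opnorm L (s n - T)"
        unfolding Phi_minus1 K_def by (simp add: algebra_simps)
    qed
    have "bnd L (Phi L d N m T a \<eta>)"
      using Phi_bound[OF T ab eb] unfolding bnd_def by blast
    hence "mop L (Phi L d N m T a \<eta>) \<in> checkers L"
      by (intro ch_closed[OF sc _ lim2] mult_bo')
    thus "T \<in> V" using TW by (simp add: V_def)
  qed
  hence "Xfib L m \<subseteq> V" unfolding Xfib_def by (rule cspan_induct)
  thus ?thesis by (auto simp: V_def \<eta>_def)
qed



lemma Phi_zero2: "Phi L d N m \<xi> a 0 w = 0"
proof -
  have "Phi L d N m \<xi> a (opscale 0 0) w = 0 * Phi L d N m \<xi> a 0 w" by (rule Phi_scale2)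
  thus ?thesis by (simp add: opscale0)
qed

lemma H:
  assumes fl: "factorial_language d N L" and a: "a \<in> checkers L"
    and xi: "\<xi> \<in> Xfib L m" and eta: "\<eta> \<in> Xfib L m"
  shows "adjoint L \<xi> \<circ> a \<circ> \<eta> \<in> checkers L"
proof -
  have ab: "a \<in> bounded_ops L" by (rule ch_bo[OF a])
  define V where "V = {\<eta> \<in> Wset L m. \<forall>\<xi>\<in>Xfib L m. mop L (Phi L d N m \<xi> a \<eta>) \<in> checkers L}"
  have "cspan_ok L (Gm L m) V"
    unfolding cspan_ok_def norm_closed_def
  proof (intro conjI ballI allI impI)
    show "V \<subseteq> bounded_ops L" using W_bo by (auto simp: V_def)
    show "(0::op) \<in> V"
    proof -
      have "mop L (Phi L d N m \<xi> a 0) = 0" for \<xi> by (rule mop_zero_w) (rule Phi_zero2)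
      thus ?thesis using W_zero ch_zero by (simp add: V_def)
    qed
    show "Gm L m \<subseteq> V"
    proof
      fix x assume "x \<in> Gm L m"
      then obtain \<nu> b where x: "x = shift L \<nu> \<circ> b" and nu: "\<nu> \<in> L" "tlen \<nu> = m" and b: "b \<in> checkers L" by auto
      have xW: "x \<in> Wset L m" unfolding x by (rule shift_mop_W(2)[OF fl nu(2) subsetD[OF ch_D b]])
      thus "x \<in> V" using inner[OF fl a nu b] by (simp add: V_def x)
    qed
  next
    fix x y assume x: "x \<in> V" and y: "y \<in> V"
    have "mop L (Phi L d N m \<xi> a (x + y)) = mop L (Phi L d N m \<xi> a x) + mop L (Phi L d N m \<xi> a y)" for \<xi>
      unfolding mult_plus by (rule mult_cong) (simp add: Phi_plus2)
    thus "x + y \<in> V" using x y by (auto simp: V_def intro: W_plus ch_plus)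
  next
    fix c x assume x: "x \<in> V"
    have "mop L (Phi L d N m \<xi> a (opscale c x)) = opscale c (mop L (Phi L d N m \<xi> a x))" for \<xi>
      unfolding mult_opscale by (rule mult_cong) (simp add: Phi_scale2)
    thus "opscale c x \<in> V" using x by (auto simp: V_def intro: W_opscale ch_opscale)
  next
    fix s T assume h: "(\<forall>n. s n \<in> V) \<and> T \<in> bounded_ops L \<and> (\<lambda>n. opnorm L (s n - T)) \<longlonglongrightarrow> 0"
    have sW: "\<And>n. s n \<in> Wset L m" and sc: "\<And>n \<xi>. \<xi> \<in> Xfib L m \<Longrightarrow> mop L (Phi L d N m \<xi> a (s n)) \<in> checkers L"
      using h by (auto simp: V_def)
    have T: "T \<in> bounded_ops L" and lim: "(\<lambda>n. opnorm L (s n - T)) \<longlonglongrightarrow> 0" using h by auto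
    have TW: "T \<in> Wset L m" by (rule W_limit[OF sW T lim])
    have sb: "\<And>n. s n \<in> bounded_ops L" using sW W_bo by blast
    have "mop L (Phi L d N m \<xi> a T) \<in> checkers L" if xi: "\<xi> \<in> Xfib L m" for \<xi>
    proof -
      have xb: "\<xi> \<in> bounded_ops L" using X_W[OF fl] xi W_bo by blast
      define K where "K = real (card (Pm d N m)) * (opnorm L \<xi> * opnorm L a)"
      have K: "K \<ge> 0" unfolding K_def by (intro mult_nonneg_nonneg opn_nonneg ab xb) simp
      have lim2: "(\<lambda>n. opnorm L (mop L (Phi L d N m \<xi> a (s n)) - mop L (Phi L d N m \<xi> a T))) \<longlonglongrightarrow> 0"
      proof (rule Phi_lim[where P="\<lambda>t. Phi L d N m \<xi> a t", OF sb T lim _ K])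
        fix n w
        have "cmod (Phi L d N m \<xi> a (s n - T) w) \<le> real (card (Pm d N m)) * (opnorm L \<xi> * opnorm L a * opnorm L (s n - T))"
          by (rule Phi_bound[OF xb ab bo_minus[OF sb T]])
        thus "cmod (Phi L d N m \<xi> a (s n) w - Phi L d N m \<xi> a T w) \<le> K * opnorm L (s n - T)"
          unfolding Phi_minus2 K_def by (simp add: algebra_simps)
      qed
      have "bnd L (Phi L d N m \<xi> a T)"
        using Phi_bound[OF xb ab T] unfolding bnd_def by blast
      thus ?thesis by (intro ch_closed[OF sc[OF xi] _ lim2] mult_bo')
    qed
    thus "T \<in> V" using TW by (simp add: V_def)
  qed
  hence "Xfib L m \<subseteq> V" unfolding Xfib_def by (rule cspan_induct)
  hence "mop L (Phi L d N m \<xi> a \<eta>) \<in> checkers L" using xi eta by (auto simp: V_def)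
  moreover have "adjoint L \<xi> \<circ> a \<circ> \<eta> = mop L (Phi L d N m \<xi> a \<eta>)"
    by (rule X_formula[OF fl subsetD[OF X_W[OF fl] xi] subsetD[OF X_W[OF fl] eta] subsetD[OF ch_D a]])
  ultimately show ?thesis by simp
qed



lemma dg_zero: "dg 0 v = 0" by (simp add: dg_def)

lemma tlen_delta: "tlen (delta i k) = unitvec i"
  by (simp add: tlen_def delta_def unitvec_def fun_eq_iff)

lemma Zind01: "Zind F v = 0 \<or> Zind F v = 1" by (simp add: Zind_def)

lemma D_app: "a \<in> Dset L \<Longrightarrow> a f = mop L (dg a) f"
  by (rule fun_cong[OF D_eq])
lemma D_left: "a \<in> Dset L \<Longrightarrow> a \<circ> X = mop L (dg a) \<circ> X"
  by (rule arg_cong[where f="\<lambda>x. x \<circ> X"]) (rule D_eq)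
lemma D_right: "a \<in> Dset L \<Longrightarrow> X \<circ> a = X \<circ> mop L (dg a)"
  by (rule arg_cong[where f="\<lambda>x. X \<circ> x"]) (rule D_eq)
lemma W_app: "a \<in> Wset L m \<Longrightarrow> a f = wop L m (wtx L m a) f"
  by (rule fun_cong[OF W_eq])

lemma Q_comp: "a \<in> Dset L \<Longrightarrow> a \<circ> mop L (Zind F) = mop L (\<lambda>v. dg a v * Zind F v)"
  unfolding D_left[of a L] by (rule mult_comp[OF bnd_Zind])

lemma F3:
  assumes a: "a \<in> Dset L"
  shows "(a = a \<circ> mop L (Zind F)) \<longleftrightarrow> (\<forall>v\<in>L. Zind F v = 0 \<longrightarrow> dg a v = 0)"
proof
  assume e: "a = a \<circ> mop L (Zind F)"
  show "\<forall>v\<in>L. Zind F v = 0 \<longrightarrow> dg a v = 0"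
  proof (intro ballI impI)
    fix v assume v: "v \<in> L" and z: "Zind F v = 0"
    have "dg a v = dg (a \<circ> mop L (Zind F)) v" using e by simp
    also have "\<dots> = dg (mop L (\<lambda>v. dg a v * Zind F v)) v" unfolding Q_comp[OF a] ..
    finally show "dg a v = 0" using v z by (simp add: dg_mult)
  qed
next
  assume h: "\<forall>v\<in>L. Zind F v = 0 \<longrightarrow> dg a v = 0"
  have "mop L (dg a) = mop L (\<lambda>v. dg a v * Zind F v)"
  proof (rule mult_cong)
    fix v assume "v \<in> L" thus "dg a v = dg a v * Zind F v" using h Zind01[of F v] by auto
  qed
  thus "a = a \<circ> mop L (Zind F)" unfolding Q_comp[OF a] using D_eq[OF a] by simp
qed

lemma F4:
  assumes a: "a \<in> Dset L"
  shows "(a \<circ> mop L (Zind F) = 0) \<longleftrightarrow> (\<forall>v\<in>L. Zind F v = 1 \<longrightarrow> dg a v = 0)"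
proof
  assume e: "a \<circ> mop L (Zind F) = 0"
  show "\<forall>v\<in>L. Zind F v = 1 \<longrightarrow> dg a v = 0"
  proof (intro ballI impI)
    fix v assume v: "v \<in> L" and z: "Zind F v = 1"
    have "dg (mop L (\<lambda>v. dg a v * Zind F v)) v = dg 0 v" using e unfolding Q_comp[OF a] by simp
    thus "dg a v = 0" using v z by (simp add: dg_mult dg_zero)
  qed
next
  assume h: "\<forall>v\<in>L. Zind F v = 1 \<longrightarrow> dg a v = 0"
  have "mop L (\<lambda>v. dg a v * Zind F v) = 0"
  proof (rule mop_zero_w)
    fix v assume "v \<in> L" thus "dg a v * Zind F v = 0" using h Zind01[of F v] by auto
  qed
  thus "a \<circ> mop L (Zind F) = 0" unfolding Q_comp[OF a] .
qed

lemma Zind_0: "i \<in> F \<Longrightarrow> v i \<noteq> [] \<Longrightarrow> Zind F v = 0" by (auto simp: Zind_def)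

theorem proposition9p16:
  fixes d N :: nat and L :: "word set" and F :: "nat set"
  assumes "factorial_language d N L"
    and "F \<noteq> {}" and "F \<subseteq> {1..N}"
  shows "(\<Inter>i\<in>F. ker_phi L i) = {a \<in> checkers L. a = a \<circ> QF d L F}
    \<and> {a \<in> checkers L. a \<circ> QF d L F = 0} \<subseteq> IF N L F
    \<and> (QF d L F \<in> checkers L \<longleftrightarrow> IF N L F = {a \<circ> (idop L - QF d L F) | a. a \<in> checkers L})"
proof -
  note fl = assms(1)
  have finF: "finite F" using assms(3) finite_subset by blast
  have Qe: "QF d L F = mop L (Zind F)" by (rule QF_mop[OF fl finF])
  define K where "K = (\<Inter>i\<in>F. ker_phi L i)"
  have chD: "\<And>a. a \<in> checkers L \<Longrightarrow> a \<in> Dset L" using ch_D by blast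
  have P1: "K = {a \<in> checkers L. a = a \<circ> QF d L F}"
  proof
    show "K \<subseteq> {a \<in> checkers L. a = a \<circ> QF d L F}"
    proof
      fix a assume aK: "a \<in> K"
      obtain i0 where "i0 \<in> F" using assms(2) by blast
      hence a: "a \<in> checkers L" using aK by (auto simp: K_def ker_phi_def)
      have "\<forall>v\<in>L. Zind F v = 0 \<longrightarrow> dg a v = 0"
      proof (intro ballI impI)
        fix v assume v: "v \<in> L" and z: "Zind F v = 0"
        then obtain i where i: "i \<in> F" "v i \<noteq> []" by (auto simp: Zind_def split: if_splits)
        define k where "k = hd (v i)"
        obtain w where vw: "v = tcat (delta i k) w" using delta_split[of v i k] i k_def by blast
        have vL: "tcat (delta i k) w \<in> L" using v vw by simp
        have wL: "w \<in> L" by (rule fl_sub(2)[OF fl vL])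
        have dL: "delta i k \<in> L" by (rule fl_sub(1)[OF fl vL])
        define \<xi> where "\<xi> = shift L (delta i k) \<circ> idop L"
        have "\<xi> \<in> Xfib L (unitvec i)"
          unfolding Xfib_def
          by (rule subsetD[OF cspan_gen], unfold \<xi>_def, intro CollectI exI[of _ "delta i k"] exI[of _ "idop L"] conjI refl dL ch_idop tlen_delta)
        moreover have "a \<in> ker_phi L i" using aK i by (auto simp: K_def)
        ultimately have "a \<circ> \<xi> = 0" by (auto simp: ker_phi_def)
        hence "(a \<circ> \<xi>) (ev w) v = 0" by simp
        moreover have "(a \<circ> \<xi>) (ev w) = a (ev v)"
          unfolding \<xi>_def using ev_ell2[OF wL] shift_ev[OF wL, of "delta i k"] v vw
          by (simp add: idop_def)
        ultimately show "dg a v = 0" by (simp add: dg_def)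
      qed
      hence "a = a \<circ> QF d L F" unfolding Qe using F3[OF chD[OF a]] by blast
      thus "a \<in> {a \<in> checkers L. a = a \<circ> QF d L F}" using a by simp
    qed
  next
    show "{a \<in> checkers L. a = a \<circ> QF d L F} \<subseteq> K"
    proof
      fix a assume "a \<in> {a \<in> checkers L. a = a \<circ> QF d L F}"
      hence a: "a \<in> checkers L" and e: "a = a \<circ> mop L (Zind F)" using Qe by auto
      have aD: "a \<in> Dset L" by (rule chD[OF a])
      have z: "\<forall>v\<in>L. Zind F v = 0 \<longrightarrow> dg a v = 0" using F3[OF aD] e by blast
      have "a \<in> ker_phi L i" if i: "i \<in> F" for i
        unfolding ker_phi_def
      proof (intro CollectI conjI ballI a)
        fix \<xi> assume "\<xi> \<in> Xfib L (unitvec i)"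
        hence xW: "\<xi> \<in> Wset L (unitvec i)" using X_W[OF fl] by blast
        have xb: "\<xi> \<in> bounded_ops L" by (rule W_bo[OF xW])
        show "a \<circ> \<xi> = 0"
        proof
          fix f
          show "(a \<circ> \<xi>) f = 0 f"
          proof (cases "f \<in> ell2 L")
            case False thus ?thesis by (simp add: bo_out[OF xb] bo_0[OF D_bo[OF aD]])
          next
            case f: True
            show ?thesis
            proof
              fix v
              have "a (\<xi> f) v = mop L (dg a) (\<xi> f) v" unfolding D_app[OF aD, of "\<xi> f"] ..
              hence av: "a (\<xi> f) v = dg a v * \<xi> f v" using bo_ell2[OF xb f] by (simp add: mop_def)
              have "\<xi> f v = wop L (unitvec i) (wtx L (unitvec i) \<xi>) f v" unfolding W_app[OF xW, of f] ..
              hence xv: "\<xi> f v = (if wg L (unitvec i) v then wtx L (unitvec i) \<xi> v * f (dropm (unitvec i) v) else 0)"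
                using f by (simp add: wop_def)
              have "dg a v * \<xi> f v = 0"
              proof (cases "wg L (unitvec i) v")
                case True
                hence "v \<in> L" "1 \<le> length (v i)" by (auto simp: wg_def unitvec_def dest: spec[of _ i])
                hence "v i \<noteq> []" "v \<in> L" by auto
                hence "dg a v = 0" using z Zind_0[OF i, of v] by blast
                thus ?thesis by simp
              qed (simp add: xv)
              thus "(a \<circ> \<xi>) f v = 0 f v" using av by simp
            qed
          qed
        qed
      qed
      thus "a \<in> K" by (auto simp: K_def)
    qed
  qed
  have Kc: "\<And>b. b \<in> K \<Longrightarrow> b \<in> checkers L \<and> (\<forall>v\<in>L. Zind F v = 0 \<longrightarrow> dg b v = 0)"
  proof -
    fix b assume "b \<in> K"
    hence b: "b \<in> checkers L" "b = b \<circ> mop L (Zind F)" using P1 Qe by auto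
    thus "b \<in> checkers L \<and> (\<forall>v\<in>L. Zind F v = 0 \<longrightarrow> dg b v = 0)" using F3[OF chD[OF b(1)]] by blast
  qed
  have P2: "{a \<in> checkers L. a \<circ> QF d L F = 0} \<subseteq> IF N L F"
  proof
    fix a assume "a \<in> {a \<in> checkers L. a \<circ> QF d L F = 0}"
    hence a: "a \<in> checkers L" and e: "a \<circ> mop L (Zind F) = 0" using Qe by auto
    have aD: "a \<in> Dset L" by (rule chD[OF a])
    have z: "\<forall>v\<in>L. Zind F v = 1 \<longrightarrow> dg a v = 0" using F4[OF aD] e by blast
    have ann: "x \<circ> b = 0" if xD: "x \<in> Dset L" and bK: "b \<in> K" and
      xz: "\<forall>v\<in>L. Zind F v = 1 \<longrightarrow> dg x v = 0" for x b
    proof -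
      have bc: "b \<in> checkers L" and bz: "\<forall>v\<in>L. Zind F v = 0 \<longrightarrow> dg b v = 0" using Kc[OF bK] by auto
      have bD: "b \<in> Dset L" by (rule chD[OF bc])
      have "x \<circ> b = mop L (dg x) \<circ> b" by (rule D_left[OF xD])
      also have "\<dots> = mop L (dg x) \<circ> mop L (dg b)" by (rule D_right[OF bD])
      also have "\<dots> = mop L (\<lambda>v. dg x v * dg b v)" by (rule mult_comp[OF D_bnd[OF bD]])
      also have "\<dots> = 0"
      proof (rule mop_zero_w)
        fix v assume "v \<in> L" thus "dg x v * dg b v = 0" using xz bz Zind01[of F v] by auto
      qed
      finally show ?thesis .
    qed
    have aJ: "a \<in> JF L F" unfolding JF_def annihilator_def K_def[symmetric]
      using a ann[OF aD _ z] by auto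
    have "adjoint L \<xi> \<circ> a \<circ> \<eta> \<in> JF L F"
      if m: "\<forall>i\<in>F. m i = 0" and xi: "\<xi> \<in> Xfib L m" and eta: "\<eta> \<in> Xfib L m" for m \<xi> \<eta>
    proof -
      have Xc: "adjoint L \<xi> \<circ> a \<circ> \<eta> \<in> checkers L" by (rule H[OF fl a xi eta])
      have Xe: "adjoint L \<xi> \<circ> a \<circ> \<eta> = mop L (Phi L d N m \<xi> a \<eta>)"
        by (rule X_formula[OF fl subsetD[OF X_W[OF fl] xi] subsetD[OF X_W[OF fl] eta] aD])
      have bndP: "bnd L (Phi L d N m \<xi> a \<eta>)"
        using Phi_bound[OF W_bo[OF subsetD[OF X_W[OF fl] xi]] D_bo[OF aD] W_bo[OF subsetD[OF X_W[OF fl] eta]]]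
        unfolding bnd_def by blast
      have XD: "adjoint L \<xi> \<circ> a \<circ> \<eta> \<in> Dset L" unfolding Xe by (rule mult_D[OF bndP])
      have "\<forall>v\<in>L. Zind F v = 1 \<longrightarrow> dg (adjoint L \<xi> \<circ> a \<circ> \<eta>) v = 0"
      proof (intro ballI impI)
        fix w assume w: "w \<in> L" and zw: "Zind F w = 1"
        have "Phi L d N m \<xi> a \<eta> w = 0"
          unfolding Phi_def
        proof (rule sum.neutral, rule ballI)
          fix \<kappa> assume k: "\<kappa> \<in> Pm d N m"
          have "\<kappa> i = []" if "i \<in> F" for i
          proof -
            have "tlen \<kappa> i = m i" using k by (simp add: Pm_def)
            hence "length (\<kappa> i) = 0" using m that by (simp add: tlen_def)
            thus ?thesis by simp
          qed
          hence "Zind F (tcat \<kappa> w) = 1" using zw by (auto simp: Zind_def tcat_def split: if_splits)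
          thus "(if tcat \<kappa> w \<in> L then cnj (wtx L m \<xi> (tcat \<kappa> w)) * dg a (tcat \<kappa> w) * wtx L m \<eta> (tcat \<kappa> w) else 0) = 0"
            using z by auto
        qed
        thus "dg (adjoint L \<xi> \<circ> a \<circ> \<eta>) w = 0" unfolding Xe by (simp add: dg_mult w)
      qed
      thus ?thesis unfolding JF_def annihilator_def K_def[symmetric]
        using Xc ann[OF XD] by auto
    qed
    thus "a \<in> IF N L F" using aJ unfolding IF_def by blast
  qed
  have Qsq: "mop L (Zind F) = mop L (Zind F) \<circ> mop L (Zind F)"
    by (simp add: mult_comp[OF bnd_Zind]) (rule mult_cong, simp add: Zind_def)
  have IQ: "idop L - mop L (Zind F) = mop L (\<lambda>v. 1 - Zind F v)"
    by (simp add: idop_mult mult_minus)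
  have bIQ: "bnd L (\<lambda>v. 1 - Zind F v)" by (auto simp: bnd_def Zind_def intro!: exI[of _ 1])
  have IFc: "IF N L F \<subseteq> checkers L" by (auto simp: IF_def JF_def annihilator_def)
  have P3: "QF d L F \<in> checkers L \<longleftrightarrow> IF N L F = {a \<circ> (idop L - QF d L F) | a. a \<in> checkers L}"
  proof
    assume Qc: "QF d L F \<in> checkers L"
    have QK: "mop L (Zind F) \<in> K" using P1 Qc Qe Qsq by auto
    show "IF N L F = {a \<circ> (idop L - QF d L F) | a. a \<in> checkers L}"
    proof
      show "IF N L F \<subseteq> {a \<circ> (idop L - QF d L F) | a. a \<in> checkers L}"
      proof
        fix x assume x: "x \<in> IF N L F"
        have xJ: "x \<in> annihilator L K" using x unfolding IF_def JF_def K_def by blast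
        hence xc: "x \<in> checkers L" and xb: "\<forall>b\<in>K. x \<circ> b = 0" unfolding annihilator_def by blast+
        have xa: "x \<circ> mop L (Zind F) = 0" using xb QK by blast
        have xD: "x \<in> Dset L" by (rule chD[OF xc])
        have z: "\<forall>v\<in>L. Zind F v = 1 \<longrightarrow> dg x v = 0" using F4[OF xD] xa by blast
        have "x \<circ> (idop L - QF d L F) = mop L (dg x) \<circ> mop L (\<lambda>v. 1 - Zind F v)"
          unfolding Qe IQ by (rule D_left[OF xD])
        also have "\<dots> = mop L (\<lambda>v. dg x v * (1 - Zind F v))" by (rule mult_comp[OF bIQ])
        also have "\<dots> = mop L (dg x)"
        proof (rule mult_cong)
          fix v assume "v \<in> L" thus "dg x v * (1 - Zind F v) = dg x v" using z Zind01[of F v] by auto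
        qed
        also have "\<dots> = x" using D_eq[OF xD] by simp
        finally have xe: "x \<circ> (idop L - QF d L F) = x" .
        show "x \<in> {a \<circ> (idop L - QF d L F) | a. a \<in> checkers L}"
          by (intro CollectI exI[of _ x]) (simp add: xc xe)
      qed
    next
      show "{a \<circ> (idop L - QF d L F) | a. a \<in> checkers L} \<subseteq> IF N L F"
      proof
        fix y assume "y \<in> {a \<circ> (idop L - QF d L F) | a. a \<in> checkers L}"
        then obtain a where a: "a \<in> checkers L" and y: "y = a \<circ> (idop L - QF d L F)" by auto
        have yc: "y \<in> checkers L" unfolding y by (intro ch_comp ch_minus ch_idop a Qc)
        have "y \<circ> QF d L F = mop L (dg a) \<circ> mop L (\<lambda>v. 1 - Zind F v) \<circ> mop L (Zind F)"
          unfolding y Qe IQ D_left[OF chD[OF a], of "mop L (\<lambda>v. 1 - Zind F v)"] ..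
        also have "\<dots> = mop L (\<lambda>v. dg a v * (1 - Zind F v) * Zind F v)"
          by (simp add: mult_comp[OF bIQ] mult_comp[OF bnd_Zind])
        also have "\<dots> = 0" by (rule mop_zero_w) (simp add: Zind_def)
        finally show "y \<in> IF N L F" using P2 yc by blast
      qed
    qed
  next
    assume e: "IF N L F = {a \<circ> (idop L - QF d L F) | a. a \<in> checkers L}"
    have "idop L \<circ> (idop L - QF d L F) \<in> checkers L" using e IFc ch_idop by blast
    moreover have "idop L \<circ> (idop L - QF d L F) = idop L - QF d L F"
      unfolding Qe IQ by (subst idop_mult, subst mult_comp[OF bIQ]) simp
    ultimately have "idop L - QF d L F \<in> checkers L" by simp
    hence "idop L - (idop L - QF d L F) \<in> checkers L" by (rule ch_minus[OF ch_idop])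
    thus "QF d L F \<in> checkers L" by simp
  qed
  show ?thesis using P1 P2 P3 unfolding K_def by blast
qed

end
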